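(* Let $k\in\{3,4\}$. On $\Gamma_{k+2}\setminus\Omega$ the following hold, with constants independent of $N$, $\lambda$ and the frequencies: (1) $|M_{k+2}|\lesssim m(\xi_1^* )^2|\xi_1^*||\xi_3^*|^2$; (2) if moreover $|\xi_1^*|\sim|\xi_2^*|\gtrsim N\gg|\xi_3^*|\sim|\xi_4^*|$, then $|M_{k+2}|\lesssim|\xi_3^*||\xi_4^*||\xi_5^*|$; (3) if moreover $|\xi_4^*|\gg|\xi_5^*|$, then $|M_{k+2}|\lesssim m(\xi_1^* )^2|\xi_1^*|^2|\xi_5^*|$.
   Context: Fix $k\in\{3,4\}$, $s\in[\tfrac12,1)$, a large parameter $N\ge1$ and a period $\lambda\ge1$. The frequency variables range over $\frac1\lambda\mathbb Z$. The multiplier $m=m_{N,s}:\mathbb R\to(0,1]$ is a smooth even function, nonincreasing in $|\xi|$, with $m(\xi)=1$ for $|\xi|\le N$ and $m(\xi)=N^{1-s}|\xi|^{s-1}$ for $|\xi|>2N$. For $n\ge2$, $\Gamma_n=\{(\xi_1,\dots,\xi_n)\in(\frac1\lambda\mathbb Z)^n:\xi_1+\dots+\xi_n=0\}$. Write $m_j=m(\xi_j)$, $\alpha_n=\xi_1^3+\dots+\xi_n^3$, $M_{k+2}=i(m_1^2\xi_1^3+\dots+m_{k+2}^2\xi_{k+2}^3)$. For a tuple of frequencies, $\xi_1^*,\xi_2^*,\dots$ denotes its rearrangement with $|\xi_1^*|\ge|\xi_2^*|\ge\cdots$; when $k=3$ set $\xi_6^*=0$. Notation: $A\lesssim B$ means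 $A\le CB$ with $C$ independent of $N,\lambda$ and the frequencies; $A\sim B$ means $A\lesssim B\lesssim A$; $A\ll B$ (or $B\gg A$) means $A\le C_0^{-1}B$ for a fixed sufficiently large absolute constant $C_0$. The non-resonant set is $\Omega=\Omega_1\cup\Omega_2\cup\Omega_3\cup\Omega_4\subset\Gamma_{k+2}$, where $\Omega_1=\{|\xi_3^*|\gg|\xi_4^*|\}$; $\Omega_2=\{|\xi_1^*|\sim|\xi_2^*|\gtrsim N\gg|\xi_3^*|\sim|\xi_4^*|,\ |{\xi_1^*}^3+{\xi_2^*}^3|\gg|{\xi_3^*}^3+\dots+{\xi_{k+2}^*}^3|\}$; $\Omega_3=\{|\xi_1^*|\gg|\xi_3^*|,\ |\xi_1^*+\xi_2^*||\xi_1^*|\gg|\xi_3^*|^2\}$; $\Omega_4=\{|\xi_4^*|\gg|\xi_5^*|,\ |\xi_1^*+\xi_2^*||\xi_1^*+\xi_3^*||\xi_1^*+\xi_4^*|\gg|\xi_5^*||\xi_1^*|^2,\ |m(\xi_1^* )^2{\xi_1^*}^3+\dots+m(\xi_4^* )^2{\xi_4^*}^3|\gg|m(\xi_5^* )^2{\xi_5^*}^3+m(\xi_6^* )^2{\xi_6^*}^3|\}$ (each set consisting of the points of $\Gamma_{k+2}$ satisfying the listed conditions). *)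

theory Defs
  imports "HOL-Analysis.Analysis"
begin

text \<open>Asymptotic notation with explicit constants.
  ll C0 a b  means  a << b, i.e. a \<le> C0^{-1} b;
  sim D a b  means  a ~ b with constant D;
  gtrsim D a b means a \<gtrsim> b, i.e. b \<le> D a.\<close>

definition ll :: "real \<Rightarrow> real \<Rightarrow> real \<Rightarrow> bool" where
  "ll C0 a b \<longleftrightarrow> C0 * a \<le> b"

definition sim :: "real \<Rightarrow> real \<Rightarrow> real \<Rightarrow> bool" where
  "sim D a b \<longleftrightarrow> a \<le> D * b \<and> b \<le> D * a"

definition gtrsim :: "real \<Rightarrow> real \<Rightarrow> real \<Rightarrow> bool" where
  "gtrsim D a b \<longleftrightarrow> b \<le> D * a"

definition profile :: "real \<Rightarrow> (real \<Rightarrow> real) \<Rightarrow> bool" where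
  "profile s mu \<longleftrightarrow>
     (\<forall>n. (deriv ^^ n) mu differentiable_on UNIV) \<and>
     (\<forall>x. mu (-x) = mu x) \<and>
     (\<forall>x y. \<bar>x\<bar> \<le> \<bar>y\<bar> \<longrightarrow> mu y \<le> mu x) \<and>
     (\<forall>x. 0 < mu x \<and> mu x \<le> 1) \<and>
     (\<forall>x. \<bar>x\<bar> \<le> 1 \<longrightarrow> mu x = 1) \<and>
     (\<forall>x. \<bar>x\<bar> > 2 \<longrightarrow> mu x = \<bar>x\<bar> powr (s - 1))"

definition mult :: "(real \<Rightarrow> real) \<Rightarrow> real \<Rightarrow> real \<Rightarrow> real" where
  "mult mu N \<xi> = mu (\<xi> / N)"

definition in_Gamma :: "nat \<Rightarrow> real \<Rightarrow> (nat \<Rightarrow> real) \<Rightarrow> bool" where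
  "in_Gamma n lam xi \<longleftrightarrow>
     (\<forall>j\<in>{1..n}. \<exists>z::int. xi j = of_int z / lam) \<and> (\<Sum>j=1..n. xi j) = 0"

definition sorts :: "nat \<Rightarrow> (nat \<Rightarrow> real) \<Rightarrow> (nat \<Rightarrow> nat) \<Rightarrow> bool" where
  "sorts n xi \<sigma> \<longleftrightarrow> bij_betw \<sigma> {1..n} {1..n} \<and>
     (\<forall>i\<in>{1..n}. \<forall>j\<in>{1..n}. i \<le> j \<longrightarrow> \<bar>xi (\<sigma> j)\<bar> \<le> \<bar>xi (\<sigma> i)\<bar>)"

text \<open>The rearranged tuple xi^*; entries beyond n are 0 (so xi_6^* = 0 when k = 3).\<close>

definition star :: "nat \<Rightarrow> (nat \<Rightarrow> real) \<Rightarrow> (nat \<Rightarrow> nat) \<Rightarrow> nat \<Rightarrow> real" where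
  "star n xi \<sigma> i = (if 1 \<le> i \<and> i \<le> n then xi (\<sigma> i) else 0)"

definition Mk :: "nat \<Rightarrow> (real \<Rightarrow> real) \<Rightarrow> (nat \<Rightarrow> real) \<Rightarrow> complex" where
  "Mk n m xi = \<i> * complex_of_real (\<Sum>j=1..n. (m (xi j))\<^sup>2 * (xi j) ^ 3)"

definition Omega1 :: "real \<Rightarrow> (nat \<Rightarrow> real) \<Rightarrow> bool" where
  "Omega1 C0 xs \<longleftrightarrow> ll C0 \<bar>xs 4\<bar> \<bar>xs 3\<bar>"

definition Omega2 :: "nat \<Rightarrow> real \<Rightarrow> real \<Rightarrow> real \<Rightarrow> (nat \<Rightarrow> real) \<Rightarrow> bool" where
  "Omega2 n C0 D N xs \<longleftrightarrow>
     sim D \<bar>xs 1\<bar> \<bar>xs 2\<bar> \<and> gtrsim D \<bar>xs 2\<bar> N \<and> ll C0 \<bar>xs 3\<bar> N \<and> sim D \<bar>xs 3\<bar> \<bar>xs 4\<bar> \<and>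
     ll C0 \<bar>\<Sum>j=3..n. (xs j) ^ 3\<bar> \<bar>(xs 1) ^ 3 + (xs 2) ^ 3\<bar>"

definition Omega3 :: "real \<Rightarrow> (nat \<Rightarrow> real) \<Rightarrow> bool" where
  "Omega3 C0 xs \<longleftrightarrow> ll C0 \<bar>xs 3\<bar> \<bar>xs 1\<bar> \<and>
     ll C0 (\<bar>xs 3\<bar>\<^sup>2) (\<bar>xs 1 + xs 2\<bar> * \<bar>xs 1\<bar>)"

definition Omega4 :: "real \<Rightarrow> (real \<Rightarrow> real) \<Rightarrow> (nat \<Rightarrow> real) \<Rightarrow> bool" where
  "Omega4 C0 m xs \<longleftrightarrow> ll C0 \<bar>xs 5\<bar> \<bar>xs 4\<bar> \<and>
     ll C0 (\<bar>xs 5\<bar> * \<bar>xs 1\<bar>\<^sup>2) (\<bar>xs 1 + xs 2\<bar> * \<bar>xs 1 + xs 3\<bar> * \<bar>xs 1 + xs 4\<bar>) \<and>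
     ll C0 \<bar>(m (xs 5))\<^sup>2 * (xs 5) ^ 3 + (m (xs 6))\<^sup>2 * (xs 6) ^ 3\<bar>
           \<bar>\<Sum>j=1..4. (m (xs j))\<^sup>2 * (xs j) ^ 3\<bar>"

definition in_Omega :: "nat \<Rightarrow> real \<Rightarrow> real \<Rightarrow> real \<Rightarrow> (real \<Rightarrow> real) \<Rightarrow> (nat \<Rightarrow> real) \<Rightarrow> bool" where
  "in_Omega n C0 D N m xs \<longleftrightarrow>
     Omega1 C0 xs \<or> Omega2 n C0 D N xs \<or> Omega3 C0 xs \<or> Omega4 C0 m xs"

end

theory Submission
  imports Defs
begin

lemma taylor1:
  fixes f f' :: "real \<Rightarrow> real"
  assumes d: "\<And>x. (f has_real_derivative f' x) (at x)"
    and bd: "\<And>t. min a b \<le> t \<Longrightarrow> t \<le> max a b \<Longrightarrow> \<bar>f' t\<bar> \<le> L"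
  shows "\<bar>f b - f a\<bar> \<le> L * \<bar>b - a\<bar>"
proof (cases a b rule: linorder_cases)
  case less
  then obtain z where z: "a < z" "z < b" "f b - f a = (b - a) * f' z"
    using MVT2[of a b f f'] d by blast
  have "\<bar>f' z\<bar> \<le> L" using bd z less by auto
  then show ?thesis using z less by (simp add: abs_mult mult.commute mult_right_mono)
next
  case equal then show ?thesis by simp
next
  case greater
  then obtain z where z: "b < z" "z < a" "f a - f b = (a - b) * f' z"
    using MVT2[of b a f f'] d by blast
  have "\<bar>f' z\<bar> \<le> L" using bd z greater by auto
  then have "\<bar>f a - f b\<bar> \<le> L * \<bar>a - b\<bar>" using z greater by (simp add: abs_mult mult.commute mult_right_mono)
  then show ?thesis by (simp add: abs_minus_commute)
qed

lemma taylor2: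
  fixes f f1 f2 :: "real \<Rightarrow> real"
  assumes d1: "\<And>x. (f has_real_derivative f1 x) (at x)"
    and d2: "\<And>x. (f1 has_real_derivative f2 x) (at x)"
    and bd: "\<And>t. min a b \<le> t \<Longrightarrow> t \<le> max a b \<Longrightarrow> \<bar>f2 t\<bar> \<le> L"
  shows "\<bar>f b - f a - f1 a * (b - a)\<bar> \<le> L * (b - a)^2"
proof -
  have L0: "0 \<le> L" using bd[of a] by (smt (verit) max.cobounded1 min.cobounded1)
  have h: "\<And>x. ((\<lambda>x. f x - f1 a * x) has_real_derivative (f1 x - f1 a)) (at x)"
    using d1 by (auto intro!: derivative_eq_intros)
  have "\<bar>f1 t - f1 a\<bar> \<le> L * \<bar>b - a\<bar>" if t: "min a b \<le> t" "t \<le> max a b" for t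
  proof -
    have "\<bar>f1 t - f1 a\<bar> \<le> L * \<bar>t - a\<bar>"
      by (rule taylor1[OF d2]) (use bd t in auto)
    also have "\<dots> \<le> L * \<bar>b - a\<bar>" using t L0 by (intro mult_left_mono) auto
    finally show ?thesis .
  qed
  then have "\<bar>(f b - f1 a * b) - (f a - f1 a * a)\<bar> \<le> (L * \<bar>b - a\<bar>) * \<bar>b - a\<bar>"
    by (intro taylor1[OF h]) auto
  then show ?thesis by (simp add: algebra_simps power2_eq_square abs_mult_self)
qed

lemma pw1: "(x::real) > 0 \<Longrightarrow> x powr a * x = x powr (a + 1)"
  by (simp add: powr_add)

context
  fixes s :: real and mu :: "real \<Rightarrow> real"
  assumes s1: "1/2 \<le> s" and s2: "s < 1" and prof: "profile s mu"
begin

lemma mu_pos: "0 < mu x" and mu_le1: "mu x \<le> 1" and mu_even: "mu (-x) = mu x"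
  using prof unfolding profile_def by auto

lemma mu_mono: "\<bar>x\<bar> \<le> \<bar>y\<bar> \<Longrightarrow> mu y \<le> mu x"
  using prof unfolding profile_def by auto

lemma mu_one: "\<bar>x\<bar> \<le> 1 \<Longrightarrow> mu x = 1"
  using prof unfolding profile_def by auto

lemma mu_out: "\<bar>x\<bar> > 2 \<Longrightarrow> mu x = \<bar>x\<bar> powr (s - 1)"
  using prof unfolding profile_def by auto

lemma mu_low: assumes "\<bar>x\<bar> \<le> 3" shows "1/3 \<le> mu x"
proof -
  have "mu 3 \<le> mu x" using assms by (intro mu_mono) auto
  moreover have "mu 3 = 3 powr (s - 1)" using mu_out[of 3] by simp
  moreover have "(3::real) powr (-1) \<le> 3 powr (s - 1)" using s1 by (intro powr_mono) auto
  moreover have "(3::real) powr (-1) = 1/3" by (simp add: powr_minus_divide)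
  ultimately show ?thesis by linarith
qed

lemma F2u: assumes "\<bar>v\<bar> \<le> \<bar>u\<bar>" shows "mu v * \<bar>v\<bar> \<le> 3 * mu u * \<bar>u\<bar>"
proof (cases "\<bar>u\<bar> \<le> 2")
  case True
  then have a: "1/3 \<le> mu u" by (intro mu_low) auto
  have "mu v * \<bar>v\<bar> \<le> 1 * \<bar>u\<bar>" using mu_le1[of v] assms by (intro mult_mono) auto
  also have "\<dots> \<le> (3 * mu u) * \<bar>u\<bar>" using a by (intro mult_right_mono) auto
  finally show ?thesis by simp
next
  case False
  have mu_u: "mu u = \<bar>u\<bar> powr (s - 1)" using False by (intro mu_out) auto
  have b: "\<bar>u\<bar> powr (s - 1) * \<bar>u\<bar> = \<bar>u\<bar> powr s" using False pw1[of "\<bar>u\<bar>" "s-1"] by simp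
  show ?thesis
  proof (cases "\<bar>v\<bar> \<le> 2")
    case True
    have "mu v * \<bar>v\<bar> \<le> 1 * 2" using mu_le1[of v] True by (intro mult_mono) auto
    moreover have "1 \<le> \<bar>u\<bar> powr s" using False s1 by (intro ge_one_powr_ge_zero) auto
    ultimately show ?thesis using mu_u b by (simp add: mult.assoc)
  next
    case F2: False
    have "mu v * \<bar>v\<bar> = \<bar>v\<bar> powr s" using F2 mu_out[of v] pw1[of "\<bar>v\<bar>" "s-1"] by simp
    also have "\<dots> \<le> \<bar>u\<bar> powr s" using assms s1 by (intro powr_mono2) auto
    moreover have "3 * mu u * \<bar>u\<bar> = 3 * \<bar>u\<bar> powr s" using mu_u b by simp
    ultimately show ?thesis using powr_ge_zero[of "\<bar>u\<bar>" s] by linarith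
  qed
qed

lemma F1u: assumes "\<bar>v\<bar> \<le> \<bar>u\<bar>" shows "(mu v)^2 * \<bar>v\<bar> \<le> 9 * (mu u)^2 * \<bar>u\<bar>"
proof (cases "\<bar>u\<bar> \<le> 2")
  case True
  then have "1/3 \<le> mu u" by (intro mu_low) auto
  then have a: "1/3 * (1/3) \<le> mu u * mu u" by (intro mult_mono) auto
  have m1: "(mu v)^2 \<le> 1" using mu_le1[of v] mu_pos[of v] by (simp add: power_le_one)
  have "(mu v)^2 * \<bar>v\<bar> \<le> 1 * \<bar>u\<bar>" using m1 assms by (intro mult_mono) auto
  also have "\<dots> \<le> (9 * (mu u)^2) * \<bar>u\<bar>" using a by (intro mult_right_mono) (auto simp: power2_eq_square)
  finally show ?thesis by simp
next
  case False
  have e: "(\<bar>x\<bar> powr (s - 1))^2 * \<bar>x\<bar> = \<bar>x\<bar> powr (2 * s - 1)" if "x \<noteq> 0" for x :: real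
  proof -
    have "(\<bar>x\<bar> powr (s - 1))^2 = \<bar>x\<bar> powr (2 * s - 2)"
      using that by (simp add: power2_eq_square powr_add[symmetric] algebra_simps)
    then show ?thesis using that pw1[of "\<bar>x\<bar>" "2 * s - 2"] by (simp add: algebra_simps)
  qed
  have mu_u: "(mu u)^2 * \<bar>u\<bar> = \<bar>u\<bar> powr (2 * s - 1)" using False mu_out[of u] e[of u] by auto
  have m1: "(mu v)^2 \<le> 1" using mu_le1[of v] mu_pos[of v] by (simp add: power_le_one)
  show ?thesis
  proof (cases "\<bar>v\<bar> \<le> 2")
    case True
    have "(mu v)^2 * \<bar>v\<bar> \<le> 1 * 2" using m1 True by (intro mult_mono) auto
    moreover have "1 \<le> \<bar>u\<bar> powr (2 * s - 1)" using False s1 by (intro ge_one_powr_ge_zero) auto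
    ultimately show ?thesis using mu_u by (simp add: mult.assoc)
  next
    case F2: False
    have "(mu v)^2 * \<bar>v\<bar> = \<bar>v\<bar> powr (2 * s-1)" using F2 mu_out[of v] e[of v] by auto
    also have "\<dots> \<le> \<bar>u\<bar> powr (2 * s-1)" using assms s1 by (intro powr_mono2) auto
    moreover have "9 * (mu u)^2 * \<bar>u\<bar> = 9 * \<bar>u\<bar> powr (2 * s-1)" using mu_u by simp
    ultimately show ?thesis using powr_ge_zero[of "\<bar>u\<bar>" "2 * s-1"] by linarith
  qed
qed

lemma dmu0: "(mu has_real_derivative deriv mu x) (at x)"
proof -
  have "((deriv ^^ 0) mu) differentiable_on UNIV" using prof unfolding profile_def by blast
  then have "mu differentiable at x" by (simp add: differentiable_on_def)
  then show ?thesis by (simp add: DERIV_deriv_iff_real_differentiable)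
qed

lemma dmu1: "(deriv mu has_real_derivative deriv (deriv mu) x) (at x)"
proof -
  have "((deriv ^^ 1) mu) differentiable_on UNIV" using prof unfolding profile_def by blast
  then have "deriv mu differentiable at x" by (simp add: differentiable_on_def)
  then show ?thesis by (simp add: DERIV_deriv_iff_real_differentiable)
qed

lemma cont_d1: "continuous_on UNIV (deriv mu)"
proof -
  have "((deriv ^^ 1) mu) differentiable_on UNIV" using prof unfolding profile_def by blast
  then show ?thesis using differentiable_imp_continuous_on by simp
qed

lemma cont_d2: "continuous_on UNIV (deriv (deriv mu))"
proof -
  have "((deriv ^^ 2) mu) differentiable_on UNIV" using prof unfolding profile_def by blast
  then show ?thesis using differentiable_imp_continuous_on by (simp add: numeral_2_eq_2)
qed

lemma d1_pos: assumes "x > 2" shows "deriv mu x = (s - 1) * x powr (s - 2)"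
proof -
  have "((\<lambda>y. y powr (s - 1)) has_real_derivative (s - 1) * x powr (s - 1 - 1)) (at x)"
    using assms by (intro has_real_derivative_powr) auto
  then have "(mu has_real_derivative (s - 1) * x powr (s - 1 - 1)) (at x)"
    by (rule has_field_derivative_transform_within_open[where S="{2<..}"]) (use assms mu_out in auto)
  then have "deriv mu x = (s - 1) * x powr (s - 1 - 1)" using DERIV_unique dmu0 by blast
  then show ?thesis by (simp add: algebra_simps)
qed

lemma d1_neg: assumes "x < -2" shows "deriv mu x = - (s - 1) * (-x) powr (s - 2)"
proof -
  have "((\<lambda>y. (-y) powr (s - 1)) has_real_derivative (s - 1) * (-x) powr (s - 1 - 1) * (-1)) (at x)"
    using assms by (auto intro!: derivative_eq_intros)
  then have "(mu has_real_derivative (s - 1) * (-x) powr (s - 1 - 1) * (-1)) (at x)"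
    by (rule has_field_derivative_transform_within_open[where S="{..<-2}"]) (use assms mu_out in auto)
  then have "deriv mu x = (s - 1) * (-x) powr (s - 1 - 1) * (-1)" using DERIV_unique dmu0 by blast
  then show ?thesis by (simp add: algebra_simps)
qed

lemma d2_pos: assumes "x > 2" shows "deriv (deriv mu) x = (s - 1) * (s - 2) * x powr (s - 3)"
proof -
  have "((\<lambda>y. (s - 1) * y powr (s - 2)) has_real_derivative (s - 1) * ((s - 2) * x powr (s - 2 - 1))) (at x)"
    using assms by (auto intro!: derivative_eq_intros)
  then have "(deriv mu has_real_derivative (s - 1) * ((s - 2) * x powr (s - 2 - 1))) (at x)"
    by (rule has_field_derivative_transform_within_open[where S="{2<..}"]) (use assms d1_pos in auto)
  then have "deriv (deriv mu) x = (s - 1) * ((s - 2) * x powr (s - 2 - 1))" using DERIV_unique dmu1 by blast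
  then show ?thesis by (simp add: algebra_simps)
qed

lemma d2_neg: assumes "x < -2" shows "deriv (deriv mu) x = (s - 1) * (s - 2) * (-x) powr (s - 3)"
proof -
  have "((\<lambda>y. - (s - 1) * (-y) powr (s - 2)) has_real_derivative - (s - 1) * ((s - 2) * (-x) powr (s - 2 - 1) * (-1))) (at x)"
    using assms by (auto intro!: derivative_eq_intros)
  then have "(deriv mu has_real_derivative - (s - 1) * ((s - 2) * (-x) powr (s - 2 - 1) * (-1))) (at x)"
    by (rule has_field_derivative_transform_within_open[where S="{..<-2}"]) (use assms d1_neg in auto)
  then have "deriv (deriv mu) x = - (s - 1) * ((s - 2) * (-x) powr (s - 2 - 1) * (-1))" using DERIV_unique dmu1 by blast
  then show ?thesis by (simp add: algebra_simps)
qed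

lemma d_out: assumes "\<bar>x\<bar> > 2"
  shows "\<bar>deriv mu x\<bar> * \<bar>x\<bar> \<le> mu x" "\<bar>deriv (deriv mu) x\<bar> * x^2 \<le> 2 * mu x"
proof -
  let ?t = "\<bar>x\<bar>"
  have t: "?t > 0" using assms by auto
  have e1: "\<bar>deriv mu x\<bar> = (1 - s) * ?t powr (s - 2)"
  proof (cases "x > 2")
    case True then show ?thesis using d1_pos[of x] s2 by (simp add: abs_mult)
  next
    case False then have "x < -2" using assms by auto
    then show ?thesis using d1_neg[of x] s2 by (simp add: abs_mult)
  qed
  have e2': "deriv (deriv mu) x = ((1 - s) * (2 - s)) * ?t powr (s - 3)"
  proof (cases "x > 2")
    case True then show ?thesis using d2_pos[of x] by (simp add: algebra_simps)
  next
    case False then have "x < -2" using assms by auto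
    then show ?thesis using d2_neg[of x] by (simp add: algebra_simps)
  qed
  have e2: "\<bar>deriv (deriv mu) x\<bar> = (1 - s) * (2 - s) * ?t powr (s - 3)"
    unfolding e2' using s2 by (simp add: abs_mult)
  have mu: "mu x = ?t powr (s - 1)" using mu_out assms by auto
  have p1: "?t powr (s - 2) * ?t = ?t powr (s - 1)" using pw1[OF t, of "s-2"] by simp
  have p2: "?t powr (s - 3) * x^2 = ?t powr (s - 1)"
  proof -
    have "x^2 = ?t * ?t" by (simp add: power2_eq_square)
    then have "?t powr (s - 3) * x^2 = (?t powr (s - 3) * ?t) * ?t" by (simp add: mult.assoc)
    also have "?t powr (s - 3) * ?t = ?t powr (s - 2)" using pw1[OF t, of "s-3"] by simp
    also have "?t powr (s - 2) * ?t = ?t powr (s - 1)" using p1 .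
    finally show ?thesis .
  qed
  show "\<bar>deriv mu x\<bar> * \<bar>x\<bar> \<le> mu x"
  proof -
    have "\<bar>deriv mu x\<bar> * \<bar>x\<bar> = (1 - s) * mu x" using e1 p1 mu by (simp add: mult.assoc)
    then show ?thesis using s1 mu_pos[of x] by (simp add: mult_le_cancel_right1)
  qed
  show "\<bar>deriv (deriv mu) x\<bar> * x^2 \<le> 2 * mu x"
  proof -
    have "\<bar>deriv (deriv mu) x\<bar> * x^2 = ((1 - s) * (2 - s)) * mu x" using e2 p2 mu by (simp add: mult.assoc)
    moreover have "(1 - s) * (2 - s) \<le> 1 * 2" using s1 s2 by (intro mult_mono) auto
    ultimately show ?thesis using mu_pos[of x] by (simp add: mult_right_mono)
  qed
qed

lemma K_exists: "\<exists>K>0. \<forall>x. \<bar>deriv mu x\<bar> * \<bar>x\<bar> \<le> K * mu x \<and> \<bar>deriv (deriv mu) x\<bar> * x^2 \<le> K * mu x"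
proof -
  obtain B1 where B1: "B1 \<ge> 0" "\<And>x. x \<in> cball 0 3 \<Longrightarrow> norm (deriv mu x) \<le> B1"
    using continuous_on_compact_bound[OF compact_cball continuous_on_subset[OF cont_d1]] by blast
  obtain B2 where B2: "B2 \<ge> 0" "\<And>x. x \<in> cball 0 3 \<Longrightarrow> norm (deriv (deriv mu) x) \<le> B2"
    using continuous_on_compact_bound[OF compact_cball continuous_on_subset[OF cont_d2]] by blast
  define K where "K = 9 * B1 + 27 * B2 + 2"
  have "\<bar>deriv mu x\<bar> * \<bar>x\<bar> \<le> K * mu x \<and> \<bar>deriv (deriv mu) x\<bar> * x^2 \<le> K * mu x" for x
  proof (cases "\<bar>x\<bar> \<le> 3")
    case True
    have m3: "1/3 \<le> mu x" using mu_low True by auto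
    have a: "\<bar>deriv mu x\<bar> \<le> B1" "\<bar>deriv (deriv mu) x\<bar> \<le> B2" using B1 B2 True by auto
    have "\<bar>deriv mu x\<bar> * \<bar>x\<bar> \<le> B1 * 3" using a True by (intro mult_mono) auto
    also have "\<dots> = (9 * B1) * (1/3)" by simp
    also have "\<dots> \<le> (9 * B1) * mu x" using m3 B1 by (intro mult_left_mono) auto
    also have "\<dots> \<le> K * mu x" using mu_pos[of x] B2 unfolding K_def by (intro mult_right_mono) auto
    finally have 1: "\<bar>deriv mu x\<bar> * \<bar>x\<bar> \<le> K * mu x" .
    have "\<bar>x\<bar> * \<bar>x\<bar> \<le> 3 * 3" using True by (intro mult_mono) auto
    then have x2: "x^2 \<le> 9" by (simp add: power2_eq_square)
    have "\<bar>deriv (deriv mu) x\<bar> * x^2 \<le> B2 * 9" using a x2 by (intro mult_mono) auto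
    also have "\<dots> = (27 * B2) * (1/3)" by simp
    also have "\<dots> \<le> (27 * B2) * mu x" using m3 B2 by (intro mult_left_mono) auto
    also have "\<dots> \<le> K * mu x" using mu_pos[of x] B1 unfolding K_def by (intro mult_right_mono) auto
    finally show ?thesis using 1 by simp
  next
    case False
    then have "\<bar>x\<bar> > 2" by simp
    note d = d_out[OF this]
    have "1 * mu x \<le> K * mu x" "2 * mu x \<le> K * mu x" using mu_pos[of x] B1 B2 unfolding K_def
      by (intro mult_right_mono; simp)+
    then show ?thesis using d by linarith
  qed
  moreover have "K > 0" unfolding K_def using B1 B2 by simp
  ultimately show ?thesis by blast
qed

end

lemma abs_sum2: fixes a b A B :: real shows "\<bar>a\<bar> \<le> A \<Longrightarrow> \<bar>b\<bar> \<le> B \<Longrightarrow> \<bar>a + b\<bar> \<le> A + B"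
  by (rule order_trans[OF abs_triangle_ineq add_mono])

locale gsetup =
  fixes m g g1 g2 :: "real \<Rightarrow> real" and K1 K2 N :: real
  assumes g_def: "\<And>x. g x = (m x)^2 * x^3"
  and m_pos: "\<And>x. 0 < m x" and m_le1: "\<And>x. m x \<le> 1"
  and mF1: "\<And>x y. \<bar>y\<bar> \<le> \<bar>x\<bar> \<Longrightarrow> (m y)^2 * \<bar>y\<bar> \<le> 9 * (m x)^2 * \<bar>x\<bar>"
  and mF2: "\<And>x y. \<bar>y\<bar> \<le> \<bar>x\<bar> \<Longrightarrow> m y * \<bar>y\<bar> \<le> 3 * m x * \<bar>x\<bar>"
  and m_even: "\<And>x. m (-x) = m x"
  and m_one: "\<And>x. \<bar>x\<bar> \<le> N \<Longrightarrow> m x = 1"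
  and dg: "\<And>x. (g has_real_derivative g1 x) (at x)"
  and dg1: "\<And>x. (g1 has_real_derivative g2 x) (at x)"
  and b1: "\<And>x. \<bar>g1 x\<bar> \<le> K1 * (m x)^2 * x^2"
  and b2: "\<And>x. \<bar>g2 x\<bar> \<le> K2 * (m x)^2 * \<bar>x\<bar>"
  and K1: "0 \<le> K1" and K2: "0 \<le> K2"
begin

lemma g_odd: "g (-x) = - g x" by (simp add: g_def m_even)

lemma gabs: "\<bar>g x\<bar> = (m x)^2 * \<bar>x\<bar> * x^2"
  by (simp add: g_def abs_mult power2_eq_square power3_eq_cube)

lemma gb1: assumes "\<bar>y\<bar> \<le> \<bar>x\<bar>" shows "\<bar>g y\<bar> \<le> 9 * (m x)^2 * \<bar>x\<bar> * y^2"
  unfolding gabs using mF1[OF assms] by (intro mult_right_mono) auto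

lemma mF2sq: assumes "\<bar>y\<bar> \<le> \<bar>x\<bar>" shows "(m y)^2 * y^2 \<le> 9 * (m x)^2 * x^2"
proof -
  have "(m y * \<bar>y\<bar>) * (m y * \<bar>y\<bar>) \<le> (3 * m x * \<bar>x\<bar>) * (3 * m x * \<bar>x\<bar>)"
    by (rule mult_mono[OF mF2[OF assms] mF2[OF assms]]) (use m_pos[of x] m_pos[of y] in auto)
  then show ?thesis by (simp add: power2_eq_square algebra_simps)
qed

lemma gb2: assumes "\<bar>y\<bar> \<le> \<bar>x\<bar>" shows "\<bar>g y\<bar> \<le> 9 * (m x)^2 * x^2 * \<bar>y\<bar>"
proof -
  have "\<bar>g y\<bar> = ((m y)^2 * y^2) * \<bar>y\<bar>" by (simp add: gabs)
  also have "\<dots> \<le> (9 * (m x)^2 * x^2) * \<bar>y\<bar>" using mF2sq[OF assms] by (intro mult_right_mono) auto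
  finally show ?thesis .
qed

lemma g1bnd: assumes "\<bar>y\<bar> \<le> \<bar>x\<bar>" shows "\<bar>g1 y\<bar> \<le> 9 * K1 * (m x)^2 * x^2"
proof -
  have "\<bar>g1 y\<bar> \<le> K1 * ((m y)^2 * y^2)" using b1[of y] by (simp add: mult.assoc)
  also have "\<dots> \<le> K1 * (9 * (m x)^2 * x^2)" using mF2sq[OF assms] K1 by (intro mult_left_mono) auto
  finally show ?thesis by (simp add: mult.assoc)
qed

lemma g2bnd: assumes "\<bar>y\<bar> \<le> \<bar>x\<bar>" shows "\<bar>g2 y\<bar> \<le> 9 * K2 * (m x)^2 * \<bar>x\<bar>"
proof -
  have "\<bar>g2 y\<bar> \<le> K2 * ((m y)^2 * \<bar>y\<bar>)" using b2[of y] by (simp add: mult.assoc)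
  also have "\<dots> \<le> K2 * (9 * (m x)^2 * \<bar>x\<bar>)" using mF1[OF assms] K2 by (intro mult_left_mono) auto
  finally show ?thesis by (simp add: mult.assoc)
qed

lemma between_abs: fixes a b t z :: real assumes "min a b \<le> t" "t \<le> max a b" "\<bar>a\<bar> \<le> \<bar>z\<bar>" "\<bar>b\<bar> \<le> \<bar>z\<bar>" shows "\<bar>t\<bar> \<le> \<bar>z\<bar>"
proof -
  have "a \<le> \<bar>z\<bar>" "-a \<le> \<bar>z\<bar>" "b \<le> \<bar>z\<bar>" "-b \<le> \<bar>z\<bar>" using assms(3,4) by (auto simp: abs_le_iff)
  then have "- \<bar>z\<bar> \<le> min a b" "max a b \<le> \<bar>z\<bar>" by auto
  then have "- \<bar>z\<bar> \<le> t" "t \<le> \<bar>z\<bar>" using assms(1,2) by linarith+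
  then show ?thesis by (simp add: abs_le_iff)
qed

lemma pair: assumes "\<bar>x\<bar> \<le> \<bar>z\<bar>" "\<bar>y\<bar> \<le> \<bar>z\<bar>"
  shows "\<bar>g x + g y\<bar> \<le> 9 * K1 * (m z)^2 * z^2 * \<bar>x + y\<bar>"
proof -
  have "\<bar>g x - g (-y)\<bar> \<le> (9 * K1 * (m z)^2 * z^2) * \<bar>x - (-y)\<bar>"
    by (rule taylor1[OF dg]) (use assms between_abs[of x "-y" _ z] g1bnd in auto)
  then show ?thesis by (simp add: g_odd)
qed

lemma core4:
  fixes xa xb xc xd :: real
  defines "p \<equiv> xa + xb" and "q \<equiv> xa + xc" and "r \<equiv> xa + xd" and "\<sigma> \<equiv> xa + xb + xc + xd"
  assumes h2: "\<bar>xb\<bar> \<le> \<bar>xa\<bar>" and h3: "\<bar>xc\<bar> \<le> \<bar>xa\<bar>" and h4: "\<bar>xd\<bar> \<le> \<bar>xa\<bar>"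
    and o1: "\<bar>p\<bar> \<le> \<bar>q\<bar>" and o2: "\<bar>q\<bar> \<le> \<bar>r\<bar>"
  shows "\<bar>g xa + g xb + g xc + g xd\<bar> \<le> (72 + 72 * K2 + 9 * K1) * (m xa)^2 * (\<bar>p * q * r\<bar> + xa^2 * \<bar>\<sigma>\<bar>)"
proof -
  define A where "A = \<bar>xa\<bar>"
  define c where "c = (m xa)^2"
  define K3 where "K3 = 72 + 72 * K2 + 9 * K1"
  have A0: "0 \<le> A" and c0: "0 \<le> c" unfolding A_def c_def by auto
  have x1sq: "xa^2 = A * A" unfolding A_def by (simp add: power2_eq_square)
  have Pn: "0 \<le> \<bar>p * q * r\<bar>" by simp
  have K3a: "72 \<le> K3" "72 * K2 \<le> K3" "9 * K1 + 9 * K2 \<le> K3" unfolding K3_def using K1 K2 by auto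
  show ?thesis
  proof (cases "\<bar>\<sigma>\<bar> > A / 2")
    case True
    have e: "\<bar>g xi\<bar> \<le> 9 * c * (A * A * A)" if "\<bar>xi\<bar> \<le> \<bar>xa\<bar>" for xi
    proof -
      have "\<bar>g xi\<bar> \<le> 9 * c * A * xi^2" using gb1[OF that] unfolding c_def A_def .
      also have "xi^2 \<le> A * A" using that unfolding A_def by (simp add: abs_le_square_iff power2_eq_square[symmetric])
      then have "9 * c * A * xi^2 \<le> 9 * c * A * (A * A)" using c0 A0 by (intro mult_left_mono) auto
      finally show ?thesis by (simp add: mult.assoc)
    qed
    have "\<bar>g xa + g xb + g xc + g xd\<bar> \<le> 4 * (9 * c * (A * A * A))"
      using e[of xa] e[OF h2] e[OF h3] e[OF h4] by linarith
    also have "\<dots> = 36 * c * (A * A) * A" by (simp add: algebra_simps)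
    also have "\<dots> \<le> 36 * c * (A * A) * (2 * \<bar>\<sigma>\<bar>)" using True c0 A0 by (intro mult_left_mono) auto
    also have "\<dots> = 72 * c * (xa^2 * \<bar>\<sigma>\<bar>)" by (simp add: x1sq algebra_simps)
    also have "\<dots> \<le> K3 * c * (xa^2 * \<bar>\<sigma>\<bar>)" using K3a c0 by (intro mult_right_mono) auto
    also have "\<dots> \<le> K3 * c * (\<bar>p * q * r\<bar> + xa^2 * \<bar>\<sigma>\<bar>)" using K3a c0 by (intro mult_left_mono) auto
    finally show ?thesis unfolding K3_def c_def .
  next
    case False
    have rA: "A \<le> 2 * \<bar>r\<bar>"
    proof -
      have "p + q + r = 2 * xa + \<sigma>" unfolding p_def q_def r_def \<sigma>_def by simp
      then show ?thesis using False o1 o2 unfolding A_def by linarith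
    qed
    define t where "t = xc + xd"
    have pt: "p + t = \<sigma>" unfolding p_def t_def \<sigma>_def by simp
    define L2 where "L2 = 9 * K2 * c * A"
    define L1 where "L1 = 9 * K1 * c * (A * A)"
    have L20: "0 \<le> L2" unfolding L2_def using K2 c0 A0 by simp
    have g2b: "\<bar>g2 y\<bar> \<le> L2" if "\<bar>y\<bar> \<le> \<bar>xa\<bar>" for y using g2bnd[OF that] unfolding L2_def c_def A_def .
    have E1: "\<bar>g (-xb) - g xa - g1 xa * (-xb - xa)\<bar> \<le> L2 * (-xb - xa)^2"
      by (rule taylor2[OF dg dg1]) (use between_abs[of xa "-xb" _ xa] h2 g2b in auto)
    have E2: "\<bar>g xd - g (-xc) - g1 (-xc) * (xd - (-xc))\<bar> \<le> L2 * (xd - (-xc))^2"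
      by (rule taylor2[OF dg dg1]) (use between_abs[of "-xc" xd _ xa] h3 h4 g2b in auto)
    have E3: "\<bar>g1 xa - g1 (-xc)\<bar> \<le> L2 * \<bar>xa - (-xc)\<bar>"
      by (rule taylor1[OF dg1]) (use between_abs[of "-xc" xa _ xa] h3 g2b in auto)
    have E4: "\<bar>g1 (-xc)\<bar> \<le> L1" using g1bnd[of "-xc" xa] h3 unfolding L1_def c_def A_def
      by (simp add: power2_eq_square)
    define e1 where "e1 = g (-xb) - g xa - g1 xa * (-xb - xa)"
    define e2 where "e2 = g xd - g (-xc) - g1 (-xc) * (xd - (-xc))"
    have G: "g xa + g xb + g xc + g xd = p * (g1 xa - g1 (-xc)) + g1 (-xc) * \<sigma> - e1 + e2"
      unfolding e1_def e2_def p_def \<sigma>_def by (simp add: g_odd algebra_simps)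
    have E1': "\<bar>e1\<bar> \<le> L2 * p^2" using E1 unfolding e1_def p_def by (simp add: power2_eq_square algebra_simps)
    have E2': "\<bar>e2\<bar> \<le> L2 * t^2" using E2 unfolding e2_def t_def by (simp add: power2_eq_square algebra_simps)
    have E3': "\<bar>g1 xa - g1 (-xc)\<bar> \<le> L2 * \<bar>q\<bar>" using E3 unfolding q_def by simp
    have "\<bar>g xa + g xb + g xc + g xd\<bar> \<le> \<bar>p\<bar> * (L2 * \<bar>q\<bar>) + L1 * \<bar>\<sigma>\<bar> + L2 * p^2 + L2 * t^2"
    proof -
      have "\<bar>p * (g1 xa - g1 (-xc))\<bar> \<le> \<bar>p\<bar> * (L2 * \<bar>q\<bar>)" using E3' by (simp add: abs_mult mult_left_mono)
      moreover have "\<bar>g1 (-xc) * \<sigma>\<bar> \<le> L1 * \<bar>\<sigma>\<bar>" using E4 by (simp add: abs_mult mult_right_mono)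
      ultimately show ?thesis unfolding G using E1' E2' by linarith
    qed
    also have "\<dots> \<le> (72 * K2) * c * \<bar>p * q * r\<bar> + (9 * K1 + 9 * K2) * c * (xa^2 * \<bar>\<sigma>\<bar>)"
    proof -
      have pq: "\<bar>p\<bar> * \<bar>q\<bar> * A \<le> 2 * \<bar>p * q * r\<bar>"
      proof -
        have "\<bar>p\<bar> * \<bar>q\<bar> * A \<le> \<bar>p\<bar> * \<bar>q\<bar> * (2 * \<bar>r\<bar>)" using rA by (intro mult_left_mono) auto
        then show ?thesis by (simp add: abs_mult algebra_simps)
      qed
      have pp: "p^2 * A \<le> 2 * \<bar>p * q * r\<bar>"
      proof -
        have "\<bar>p\<bar> * \<bar>p\<bar> \<le> \<bar>p\<bar> * \<bar>q\<bar>" by (rule mult_left_mono[OF o1]) simp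
        then have "(\<bar>p\<bar> * \<bar>p\<bar>) * A \<le> (\<bar>p\<bar> * \<bar>q\<bar>) * A" using A0 by (rule mult_right_mono)
        then have "p^2 * A \<le> \<bar>p\<bar> * \<bar>q\<bar> * A" by (simp add: power2_eq_square)
        then show ?thesis using pq by linarith
      qed
      have tt: "t^2 \<le> 2 * p^2 + 2 * \<sigma>^2"
      proof -
        have te: "t = \<sigma> - p" using pt by simp
        have a: "t^2 = \<sigma>*\<sigma> - 2*\<sigma>*p + p*p" unfolding te by (simp add: power2_eq_square algebra_simps)
        have "0 \<le> (\<sigma> + p) * (\<sigma> + p)" by simp
        then have b: "0 \<le> \<sigma>*\<sigma> + 2*\<sigma>*p + p*p" by (simp add: algebra_simps)
        show ?thesis unfolding a using b by (simp add: power2_eq_square)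
      qed
      have ss: "\<sigma>^2 * A \<le> (A * A) * \<bar>\<sigma>\<bar> / 2"
      proof -
        have "\<bar>\<sigma>\<bar> * \<bar>\<sigma>\<bar> * A \<le> (A / 2) * \<bar>\<sigma>\<bar> * A" using False A0 by (intro mult_right_mono) auto
        then show ?thesis by (simp add: power2_eq_square algebra_simps)
      qed
      have "\<bar>p\<bar> * (L2 * \<bar>q\<bar>) = 9 * K2 * c * (\<bar>p\<bar> * \<bar>q\<bar> * A)" unfolding L2_def by (simp add: algebra_simps)
      also have "\<dots> \<le> 9 * K2 * c * (2 * \<bar>p * q * r\<bar>)" using pq K2 c0 by (intro mult_left_mono) auto
      finally have T1: "\<bar>p\<bar> * (L2 * \<bar>q\<bar>) \<le> 18 * K2 * c * \<bar>p * q * r\<bar>" by simp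
      have "L2 * p^2 = 9 * K2 * c * (p^2 * A)" unfolding L2_def by (simp add: algebra_simps)
      also have "\<dots> \<le> 9 * K2 * c * (2 * \<bar>p * q * r\<bar>)" using pp K2 c0 by (intro mult_left_mono) auto
      finally have T2: "L2 * p^2 \<le> 18 * K2 * c * \<bar>p * q * r\<bar>" by simp
      have "L2 * t^2 \<le> L2 * (2 * p^2 + 2 * \<sigma>^2)" using tt L20 by (intro mult_left_mono) auto
      also have "\<dots> = 2 * (L2 * p^2) + 18 * K2 * c * (\<sigma>^2 * A)" unfolding L2_def by (simp add: algebra_simps)
      also have "18 * K2 * c * (\<sigma>^2 * A) \<le> 18 * K2 * c * ((A * A) * \<bar>\<sigma>\<bar> / 2)" using ss K2 c0 by (intro mult_left_mono) auto
      finally have T3: "L2 * t^2 \<le> 36 * K2 * c * \<bar>p * q * r\<bar> + 9 * K2 * c * (xa^2 * \<bar>\<sigma>\<bar>)"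
        using T2 by (simp add: x1sq algebra_simps)
      have T4: "L1 * \<bar>\<sigma>\<bar> = 9 * K1 * c * (xa^2 * \<bar>\<sigma>\<bar>)" unfolding L1_def by (simp add: x1sq algebra_simps)
      have X: "(72 * K2) * c * \<bar>p * q * r\<bar> = 18 * K2 * c * \<bar>p * q * r\<bar> + 18 * K2 * c * \<bar>p * q * r\<bar> + 36 * K2 * c * \<bar>p * q * r\<bar>"
        "(9 * K1 + 9 * K2) * c * (xa^2 * \<bar>\<sigma>\<bar>) = 9 * K1 * c * (xa^2 * \<bar>\<sigma>\<bar>) + 9 * K2 * c * (xa^2 * \<bar>\<sigma>\<bar>)"
        by (simp_all add: algebra_simps)
      show ?thesis using T1 T2 T3 T4 X by linarith
    qed
    also have "\<dots> \<le> K3 * c * \<bar>p * q * r\<bar> + K3 * c * (xa^2 * \<bar>\<sigma>\<bar>)"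
      using K3a c0 by (intro add_mono mult_right_mono) auto
    also have "\<dots> = K3 * c * (\<bar>p * q * r\<bar> + xa^2 * \<bar>\<sigma>\<bar>)" by (simp add: algebra_simps)
    finally show ?thesis unfolding K3_def c_def .
  qed
qed

lemma quad:
  assumes h2: "\<bar>x2\<bar> \<le> \<bar>x1\<bar>" and h3: "\<bar>x3\<bar> \<le> \<bar>x1\<bar>" and h4: "\<bar>x4\<bar> \<le> \<bar>x1\<bar>"
  shows "\<bar>g x1 + g x2 + g x3 + g x4\<bar> \<le> (72 + 72 * K2 + 9 * K1) * (m x1)^2 *
           (\<bar>(x1 + x2) * (x1 + x3) * (x1 + x4)\<bar> + x1^2 * \<bar>x1 + x2 + x3 + x4\<bar>)"
proof -
  let ?a = "\<bar>x1 + x2\<bar>" and ?b = "\<bar>x1 + x3\<bar>" and ?c = "\<bar>x1 + x4\<bar>"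
  have "(?a \<le> ?b \<and> ?b \<le> ?c) \<or> (?a \<le> ?c \<and> ?c \<le> ?b) \<or> (?b \<le> ?a \<and> ?a \<le> ?c) \<or>
        (?b \<le> ?c \<and> ?c \<le> ?a) \<or> (?c \<le> ?a \<and> ?a \<le> ?b) \<or> (?c \<le> ?b \<and> ?b \<le> ?a)" by linarith
  then show ?thesis
  proof (elim disjE conjE)
    assume "?a \<le> ?b" "?b \<le> ?c" then show ?thesis
      using core4[where xa=x1 and xb=x2 and xc=x3 and xd=x4] assms by blast
  next
    assume "?a \<le> ?c" "?c \<le> ?b"
    then have I: "\<bar>g x1 + g x2 + g x4 + g x3\<bar> \<le> (72 + 72 * K2 + 9 * K1) * (m x1)^2 *
           (\<bar>(x1 + x2) * (x1 + x4) * (x1 + x3)\<bar> + x1^2 * \<bar>x1 + x2 + x4 + x3\<bar>)"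
      using core4[where xa=x1 and xb=x2 and xc=x4 and xd=x3] assms by blast
    have "g x1 + g x2 + g x4 + g x3 = g x1 + g x2 + g x3 + g x4" "(x1 + x2) * (x1 + x4) * (x1 + x3) = (x1 + x2) * (x1 + x3) * (x1 + x4)"
      "x1 + x2 + x4 + x3 = x1 + x2 + x3 + x4" by (simp_all add: algebra_simps)
    note e = this
    show ?thesis using I by (simp only: e)
  next
    assume "?b \<le> ?a" "?a \<le> ?c"
    then have I: "\<bar>g x1 + g x3 + g x2 + g x4\<bar> \<le> (72 + 72 * K2 + 9 * K1) * (m x1)^2 *
           (\<bar>(x1 + x3) * (x1 + x2) * (x1 + x4)\<bar> + x1^2 * \<bar>x1 + x3 + x2 + x4\<bar>)"
      using core4[where xa=x1 and xb=x3 and xc=x2 and xd=x4] assms by blast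
    have "g x1 + g x3 + g x2 + g x4 = g x1 + g x2 + g x3 + g x4" "(x1 + x3) * (x1 + x2) * (x1 + x4) = (x1 + x2) * (x1 + x3) * (x1 + x4)"
      "x1 + x3 + x2 + x4 = x1 + x2 + x3 + x4" by (simp_all add: algebra_simps)
    note e = this
    show ?thesis using I by (simp only: e)
  next
    assume "?b \<le> ?c" "?c \<le> ?a"
    then have I: "\<bar>g x1 + g x3 + g x4 + g x2\<bar> \<le> (72 + 72 * K2 + 9 * K1) * (m x1)^2 *
           (\<bar>(x1 + x3) * (x1 + x4) * (x1 + x2)\<bar> + x1^2 * \<bar>x1 + x3 + x4 + x2\<bar>)"
      using core4[where xa=x1 and xb=x3 and xc=x4 and xd=x2] assms by blast
    have "g x1 + g x3 + g x4 + g x2 = g x1 + g x2 + g x3 + g x4" "(x1 + x3) * (x1 + x4) * (x1 + x2) = (x1 + x2) * (x1 + x3) * (x1 + x4)"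
      "x1 + x3 + x4 + x2 = x1 + x2 + x3 + x4" by (simp_all add: algebra_simps)
    note e = this
    show ?thesis using I by (simp only: e)
  next
    assume "?c \<le> ?a" "?a \<le> ?b"
    then have I: "\<bar>g x1 + g x4 + g x2 + g x3\<bar> \<le> (72 + 72 * K2 + 9 * K1) * (m x1)^2 *
           (\<bar>(x1 + x4) * (x1 + x2) * (x1 + x3)\<bar> + x1^2 * \<bar>x1 + x4 + x2 + x3\<bar>)"
      using core4[where xa=x1 and xb=x4 and xc=x2 and xd=x3] assms by blast
    have "g x1 + g x4 + g x2 + g x3 = g x1 + g x2 + g x3 + g x4" "(x1 + x4) * (x1 + x2) * (x1 + x3) = (x1 + x2) * (x1 + x3) * (x1 + x4)"
      "x1 + x4 + x2 + x3 = x1 + x2 + x3 + x4" by (simp_all add: algebra_simps)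
    note e = this
    show ?thesis using I by (simp only: e)
  next
    assume "?c \<le> ?b" "?b \<le> ?a"
    then have I: "\<bar>g x1 + g x4 + g x3 + g x2\<bar> \<le> (72 + 72 * K2 + 9 * K1) * (m x1)^2 *
           (\<bar>(x1 + x4) * (x1 + x3) * (x1 + x2)\<bar> + x1^2 * \<bar>x1 + x4 + x3 + x2\<bar>)"
      using core4[where xa=x1 and xb=x4 and xc=x3 and xd=x2] assms by blast
    have "g x1 + g x4 + g x3 + g x2 = g x1 + g x2 + g x3 + g x4" "(x1 + x4) * (x1 + x3) * (x1 + x2) = (x1 + x2) * (x1 + x3) * (x1 + x4)"
      "x1 + x4 + x3 + x2 = x1 + x2 + x3 + x4" by (simp_all add: algebra_simps)
    note e = this
    show ?thesis using I by (simp only: e)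
  qed
qed

lemma claim1:
  assumes s12: "\<bar>a2\<bar> \<le> \<bar>a1\<bar>" and s23: "\<bar>a3\<bar> \<le> \<bar>a2\<bar>" and s34: "\<bar>a4\<bar> \<le> \<bar>a3\<bar>"
    and s45: "\<bar>a5\<bar> \<le> \<bar>a4\<bar>" and s56: "\<bar>a6\<bar> \<le> \<bar>a5\<bar>" and C0: "1 \<le> C0"
    and nO3: "\<not> (C0 * \<bar>a3\<bar> \<le> \<bar>a1\<bar> \<and> C0 * \<bar>a3\<bar>^2 \<le> \<bar>a1 + a2\<bar> * \<bar>a1\<bar>)"
  shows "\<bar>g a1 + g a2 + g a3 + g a4 + g a5 + g a6\<bar> \<le> (54 * C0^2 + 9 * K1 * C0 + 36) * (m a1)^2 * \<bar>a1\<bar> * \<bar>a3\<bar>^2"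
proof -
  define A where "A = \<bar>a1\<bar>"
  define c where "c = (m a1)^2"
  define Y where "Y = c * A * a3^2"
  have A0: "0 \<le> A" and c0: "0 \<le> c" and Y0: "0 \<le> Y" unfolding A_def c_def Y_def by auto
  have gj: "\<bar>g y\<bar> \<le> 9 * c * A * y^2" if "\<bar>y\<bar> \<le> \<bar>a1\<bar>" for y using gb1[OF that] unfolding c_def A_def .
  have sq: "y^2 \<le> z^2" if "\<bar>y\<bar> \<le> \<bar>z\<bar>" for y z :: real using that by (simp add: abs_le_square_iff)
  have RHS: "(54 * C0^2 + 9 * K1 * C0 + 36) * (m a1)^2 * \<bar>a1\<bar> * \<bar>a3\<bar>^2 = (54 * C0^2 + 9 * K1 * C0 + 36) * Y"
    unfolding Y_def c_def A_def by simp
  show ?thesis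
  proof (cases "C0 * \<bar>a3\<bar> \<le> \<bar>a1\<bar>")
    case False
    have AA: "A^2 \<le> C0^2 * a3^2"
    proof -
      have "A \<le> C0 * \<bar>a3\<bar>" using False unfolding A_def by simp
      then have "A * A \<le> (C0 * \<bar>a3\<bar>) * (C0 * \<bar>a3\<bar>)" using A0 by (intro mult_mono) auto
      then show ?thesis by (simp add: power2_eq_square algebra_simps)
    qed
    have each: "\<bar>g y\<bar> \<le> 9 * C0^2 * Y" if "\<bar>y\<bar> \<le> \<bar>a1\<bar>" for y
    proof -
      have "\<bar>g y\<bar> \<le> 9 * c * A * y^2" using gj[OF that] .
      also have "\<dots> \<le> 9 * c * A * A^2" using sq[OF that] c0 A0 unfolding A_def by (intro mult_left_mono) auto
      also have "\<dots> \<le> 9 * c * A * (C0^2 * a3^2)" using AA c0 A0 by (intro mult_left_mono) auto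
      finally show ?thesis unfolding Y_def by (simp add: algebra_simps)
    qed
    have "\<bar>g a1 + g a2 + g a3 + g a4 + g a5 + g a6\<bar> \<le> 6 * (9 * C0^2 * Y)"
    proof -
      have "\<bar>a3\<bar> \<le> \<bar>a1\<bar>" "\<bar>a4\<bar> \<le> \<bar>a1\<bar>" "\<bar>a5\<bar> \<le> \<bar>a1\<bar>" "\<bar>a6\<bar> \<le> \<bar>a1\<bar>" using s12 s23 s34 s45 s56 by linarith+
      then have "\<bar>g a1 + g a2 + g a3 + g a4 + g a5 + g a6\<bar> \<le> 9 * C0^2 * Y + 9 * C0^2 * Y + 9 * C0^2 * Y + 9 * C0^2 * Y + 9 * C0^2 * Y + 9 * C0^2 * Y"
        by (intro abs_sum2 each) (use s12 in auto)
      then show ?thesis by (simp add: mult.commute)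
    qed
    also have "\<dots> = (54 * C0^2) * Y" by simp
    also have "\<dots> \<le> (54 * C0^2 + 9 * K1 * C0 + 36) * Y" using Y0 K1 C0 by (intro mult_right_mono) auto
    finally show ?thesis unfolding RHS .
  next
    case True
    then have B: "\<bar>a1 + a2\<bar> * A < C0 * a3^2" using nO3 unfolding A_def by auto
    have P: "\<bar>g a1 + g a2\<bar> \<le> 9 * K1 * C0 * Y"
    proof -
      have "\<bar>g a1 + g a2\<bar> \<le> 9 * K1 * c * A^2 * \<bar>a1 + a2\<bar>" using pair[of a1 a1 a2] s12 unfolding c_def A_def by simp
      also have "\<dots> = 9 * K1 * c * A * (\<bar>a1 + a2\<bar> * A)" by (simp add: power2_eq_square algebra_simps)
      also have "\<dots> \<le> 9 * K1 * c * A * (C0 * a3^2)" using B K1 c0 A0 by (intro mult_left_mono) auto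
      finally show ?thesis unfolding Y_def by (simp add: algebra_simps)
    qed
    have each: "\<bar>g y\<bar> \<le> 9 * Y" if "\<bar>y\<bar> \<le> \<bar>a3\<bar>" for y
    proof -
      have "\<bar>y\<bar> \<le> \<bar>a1\<bar>" using that s12 s23 by linarith
      then have "\<bar>g y\<bar> \<le> 9 * c * A * y^2" by (rule gj)
      also have "\<dots> \<le> 9 * c * A * a3^2" using sq[OF that] c0 A0 by (intro mult_left_mono) auto
      finally show ?thesis unfolding Y_def by (simp add: algebra_simps)
    qed
    have "\<bar>g a1 + g a2 + g a3 + g a4 + g a5 + g a6\<bar> \<le> 9 * K1 * C0 * Y + 4 * (9 * Y)"
    proof -
      have "\<bar>a4\<bar> \<le> \<bar>a3\<bar>" "\<bar>a5\<bar> \<le> \<bar>a3\<bar>" "\<bar>a6\<bar> \<le> \<bar>a3\<bar>" using s34 s45 s56 by linarith+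
      then have "\<bar>(g a1 + g a2) + g a3 + g a4 + g a5 + g a6\<bar> \<le> 9 * K1 * C0 * Y + 9 * Y + 9 * Y + 9 * Y + 9 * Y"
        by (intro abs_sum2 each P) auto
      then show ?thesis by (simp add: add.assoc)
    qed
    also have "\<dots> \<le> (54 * C0^2 + 9 * K1 * C0 + 36) * Y" using Y0 C0 by (simp add: algebra_simps)
    finally show ?thesis unfolding RHS .
  qed
qed

lemma cube_le: fixes x y :: real assumes "\<bar>x\<bar> \<le> y" shows "\<bar>x^3\<bar> \<le> y^3"
  using assms by (simp add: power_abs power_mono)

lemma sum_cubes_pair: fixes a b :: real assumes "\<bar>b\<bar> \<le> \<bar>a\<bar>"
  shows "a^2 * \<bar>a + b\<bar> \<le> 2 * \<bar>a^3 + b^3\<bar>"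
proof -
  define Q where "Q = a^2 - a*b + b^2"
  have f: "a^3 + b^3 = (a + b) * Q" unfolding Q_def by (simp add: power2_eq_square power3_eq_cube algebra_simps)
  have "0 \<le> (a - b)^2 + b^2" by simp
  then have aQ: "a^2 \<le> 2 * Q" unfolding Q_def by (simp add: power2_eq_square algebra_simps)
  then have Q0: "0 \<le> Q" by (smt (verit) zero_le_power2)
  have "a^2 * \<bar>a + b\<bar> \<le> (2 * Q) * \<bar>a + b\<bar>" using aQ by (intro mult_right_mono) auto
  also have "\<dots> = 2 * \<bar>a^3 + b^3\<bar>" unfolding f using Q0 by (simp add: abs_mult)
  finally show ?thesis .
qed

lemma abs3: fixes x y z :: real shows "\<bar>x - y + z\<bar> \<le> \<bar>x\<bar> + \<bar>y\<bar> + \<bar>z\<bar>" by arith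

lemma claim2:
  assumes s12: "\<bar>a2\<bar> \<le> \<bar>a1\<bar>" and s23: "\<bar>a3\<bar> \<le> \<bar>a2\<bar>" and s34: "\<bar>a4\<bar> \<le> \<bar>a3\<bar>"
    and s45: "\<bar>a5\<bar> \<le> \<bar>a4\<bar>" and s56: "\<bar>a6\<bar> \<le> \<bar>a5\<bar>" and sum0: "a1 + a2 + a3 + a4 + a5 + a6 = 0"
    and C0: "1 \<le> C0" and D: "1 \<le> D" and CD: "2 * D \<le> C0"
    and h3N: "C0 * \<bar>a3\<bar> \<le> N" and hN2: "N \<le> D * \<bar>a2\<bar>"
    and nO1: "\<bar>a3\<bar> < C0 * \<bar>a4\<bar>"
    and nO2: "\<bar>a1^3 + a2^3\<bar> < C0 * \<bar>a3^3 + a4^3 + a5^3 + a6^3\<bar>"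
    and nO4: "\<bar>a4\<bar> < C0 * \<bar>a5\<bar> \<or> \<bar>a1 + a2\<bar> * \<bar>a1 + a3\<bar> * \<bar>a1 + a4\<bar> < C0 * (\<bar>a5\<bar> * \<bar>a1\<bar>^2) \<or>
              \<bar>g a1 + g a2 + g a3 + g a4\<bar> < C0 * \<bar>g a5 + g a6\<bar>"
  shows "\<bar>g a1 + g a2 + g a3 + g a4 + g a5 + g a6\<bar> \<le>
           ((18 * K1 * C0 + 1) * (4 * C0^3 + 12 * C0^2 + 6 * C0 + 2) + 2 * (C0 + 1)) * \<bar>a3\<bar> * \<bar>a4\<bar> * \<bar>a5\<bar>"
proof -
  define V where "V = \<bar>a3\<bar> * \<bar>a4\<bar> * \<bar>a5\<bar>"
  define W where "W = 4 * C0^3 + 12 * C0^2 + 6 * C0 + 2"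
  define S where "S = a3^3 + a4^3 + a5^3 + a6^3"
  define A where "A = \<bar>a1\<bar>"
  have V0: "0 \<le> V" unfolding V_def by simp
  have W0: "0 \<le> W" unfolding W_def using C0 by simp
  have RHS: "((18 * K1 * C0 + 1) * (4 * C0^3 + 12 * C0^2 + 6 * C0 + 2) + 2 * (C0 + 1)) * \<bar>a3\<bar> * \<bar>a4\<bar> * \<bar>a5\<bar>
      = ((18 * K1 * C0 + 1) * W + 2 * (C0 + 1)) * V" unfolding V_def W_def by (simp add: mult.assoc)
  have a3N: "\<bar>a3\<bar> \<le> N" using C0 h3N by (smt (verit) mult_le_cancel_right1 abs_ge_zero)
  have gc: "g y = y^3" if "\<bar>y\<bar> \<le> \<bar>a3\<bar>" for y using m_one[of y] that a3N g_def by simp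
  have l4: "\<bar>a4\<bar> \<le> \<bar>a3\<bar>" and l5: "\<bar>a5\<bar> \<le> \<bar>a3\<bar>" and l6: "\<bar>a6\<bar> \<le> \<bar>a3\<bar>" using s34 s45 s56 by linarith+
  have g3: "g a3 = a3^3" and g4: "g a4 = a4^3" and g5: "g a5 = a5^3" and g6: "g a6 = a6^3"
    using gc l4 l5 l6 by auto
  have a32: "2 * \<bar>a3\<bar> \<le> \<bar>a2\<bar>"
  proof -
    have "D * (2 * \<bar>a3\<bar>) \<le> C0 * \<bar>a3\<bar>" using CD by (simp add: mult_right_mono mult.assoc[symmetric])
    also have "\<dots> \<le> D * \<bar>a2\<bar>" using h3N hN2 by linarith
    finally show ?thesis using D by simp
  qed
  have a3A: "2 * \<bar>a3\<bar> \<le> A" unfolding A_def using a32 s12 by linarith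
  have c5: "\<bar>a5\<bar>^3 \<le> V"
  proof -
    have "\<bar>a5\<bar> * \<bar>a5\<bar> \<le> \<bar>a3\<bar> * \<bar>a4\<bar>" using l5 s45 by (intro mult_mono) auto
    then have "(\<bar>a5\<bar> * \<bar>a5\<bar>) * \<bar>a5\<bar> \<le> (\<bar>a3\<bar> * \<bar>a4\<bar>) * \<bar>a5\<bar>" by (intro mult_right_mono) auto
    then show ?thesis unfolding V_def by (simp add: power3_eq_cube)
  qed
  have c56: "\<bar>a5^3 + a6^3\<bar> \<le> 2 * V"
  proof -
    have "\<bar>a5^3\<bar> \<le> \<bar>a5\<bar>^3" by (simp add: power_abs)
    moreover have "\<bar>a6^3\<bar> \<le> \<bar>a5\<bar>^3" using cube_le[OF s56] .
    ultimately have "\<bar>a5^3 + a6^3\<bar> \<le> \<bar>a5\<bar>^3 + \<bar>a5\<bar>^3" by (intro abs_sum2)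
    then show ?thesis using c5 by linarith
  qed
  show ?thesis
  proof (cases "\<bar>g a1 + g a2 + g a3 + g a4\<bar> < C0 * \<bar>g a5 + g a6\<bar>")
    case True
    have "\<bar>(g a1 + g a2 + g a3 + g a4) + (g a5 + g a6)\<bar> \<le> C0 * \<bar>g a5 + g a6\<bar> + \<bar>g a5 + g a6\<bar>"
      using True by (intro abs_sum2) auto
    also have "\<dots> = (C0 + 1) * \<bar>a5^3 + a6^3\<bar>" by (simp add: g5 g6 algebra_simps)
    also have "\<dots> \<le> (C0 + 1) * (2 * V)" using c56 C0 by (intro mult_left_mono) auto
    also have "\<dots> \<le> ((18 * K1 * C0 + 1) * W + 2 * (C0 + 1)) * V"
    proof -
      have "0 \<le> (18 * K1 * C0 + 1) * W" using K1 C0 W0 by simp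
      then have "0 \<le> ((18 * K1 * C0 + 1) * W) * V" using V0 by simp
      then show ?thesis by (simp add: algebra_simps)
    qed
    finally show ?thesis unfolding RHS by (simp add: add.assoc)
  next
    case False
    then have nO4': "\<bar>a4\<bar> < C0 * \<bar>a5\<bar> \<or> \<bar>a1 + a2\<bar> * \<bar>a1 + a3\<bar> * \<bar>a1 + a4\<bar> < C0 * (\<bar>a5\<bar> * \<bar>a1\<bar>^2)"
      using nO4 by blast
    have SW: "\<bar>S\<bar> \<le> W * V"
    proof (cases "\<bar>a4\<bar> < C0 * \<bar>a5\<bar>")
      case True
      have "\<bar>S\<bar> \<le> \<bar>a3\<bar>^3 + \<bar>a3\<bar>^3 + \<bar>a3\<bar>^3 + \<bar>a3\<bar>^3" unfolding S_def
        by (intro abs_sum2 cube_le) (use l4 l5 l6 in auto)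
      also have "\<dots> = 4 * \<bar>a3\<bar>^3" by simp
      also have "\<bar>a3\<bar>^3 \<le> C0^3 * V"
      proof -
        have x1: "\<bar>a3\<bar> \<le> C0 * \<bar>a4\<bar>" using nO1 by simp
        have "C0 * \<bar>a4\<bar> \<le> C0 * (C0 * \<bar>a5\<bar>)" using True C0 by (intro mult_left_mono) auto
        then have x2: "\<bar>a3\<bar> \<le> C0 * (C0 * \<bar>a5\<bar>)" using x1 by linarith
        have "\<bar>a3\<bar> * \<bar>a3\<bar> \<le> (C0 * \<bar>a4\<bar>) * (C0 * (C0 * \<bar>a5\<bar>))" using x1 x2 by (intro mult_mono) auto
        then have "\<bar>a3\<bar> * (\<bar>a3\<bar> * \<bar>a3\<bar>) \<le> \<bar>a3\<bar> * ((C0 * \<bar>a4\<bar>) * (C0 * (C0 * \<bar>a5\<bar>)))"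
          by (intro mult_left_mono) auto
        then show ?thesis unfolding V_def by (simp add: power3_eq_cube algebra_simps)
      qed
      then have "4 * \<bar>a3\<bar>^3 \<le> 4 * (C0^3 * V)" by simp
      also have "\<dots> \<le> W * V"
      proof -
        have "4 * C0^3 \<le> W" unfolding W_def using C0 by simp
        then have "(4 * C0^3) * V \<le> W * V" using V0 by (intro mult_right_mono) auto
        then show ?thesis by simp
      qed
      finally show ?thesis .
    next
      case False
      then have Pr: "\<bar>a1 + a2\<bar> * \<bar>a1 + a3\<bar> * \<bar>a1 + a4\<bar> < C0 * (\<bar>a5\<bar> * A^2)" using nO4' unfolding A_def by simp
      show ?thesis
      proof (cases "A = 0")
        case True
        then have "a1 = 0" "a3 = 0" "a4 = 0" "a5 = 0" "a6 = 0" using a3A l4 l5 l6 unfolding A_def by auto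
        then show ?thesis unfolding S_def using W0 V0 by simp
      next
        case A0: False
        then have Ap: "0 < A" unfolding A_def by simp
        have b3: "A / 2 \<le> \<bar>a1 + a3\<bar>" using a3A unfolding A_def by linarith
        have b4: "A / 2 \<le> \<bar>a1 + a4\<bar>" using a3A l4 unfolding A_def by linarith
        have "\<bar>a1 + a2\<bar> * (A / 2) * (A / 2) \<le> \<bar>a1 + a2\<bar> * \<bar>a1 + a3\<bar> * \<bar>a1 + a4\<bar>"
          using b3 b4 Ap by (intro mult_mono) auto
        then have "(\<bar>a1 + a2\<bar> / 4) * A^2 < (C0 * \<bar>a5\<bar>) * A^2" using Pr by (simp add: power2_eq_square algebra_simps)
        then have s12b: "\<bar>a1 + a2\<bar> \<le> 4 * C0 * \<bar>a5\<bar>" using Ap by simp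
        have s34b: "\<bar>a3 + a4\<bar> \<le> (4 * C0 + 2) * \<bar>a5\<bar>"
        proof -
          have "a3 + a4 = - (a1 + a2) - a5 - a6" using sum0 by linarith
          then have "\<bar>a3 + a4\<bar> \<le> \<bar>a1 + a2\<bar> + \<bar>a5\<bar> + \<bar>a6\<bar>" by simp
          then show ?thesis using s12b s56 by (simp add: algebra_simps)
        qed
        have q: "\<bar>a3^2 - a3 * a4 + a4^2\<bar> \<le> 3 * (C0 * \<bar>a3\<bar> * \<bar>a4\<bar>)"
        proof -
          have "\<bar>a3 * a4\<bar> \<le> \<bar>a3\<bar> * \<bar>a3\<bar>" unfolding abs_mult by (rule mult_left_mono[OF l4]) simp
          moreover have "a4^2 \<le> \<bar>a3\<bar> * \<bar>a3\<bar>" using l4 by (simp add: abs_le_square_iff power2_eq_square[symmetric])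
          moreover have "a3^2 = \<bar>a3\<bar> * \<bar>a3\<bar>" by (simp add: power2_eq_square)
          moreover have "\<bar>a3^2 - a3 * a4 + a4^2\<bar> \<le> a3^2 + \<bar>a3 * a4\<bar> + a4^2" using abs3[of "a3^2" "a3 * a4" "a4^2"] by simp
          moreover have "\<bar>a3\<bar> * \<bar>a3\<bar> \<le> \<bar>a3\<bar> * (C0 * \<bar>a4\<bar>)" using nO1 by (intro mult_left_mono) auto
          ultimately show ?thesis by (simp add: algebra_simps)
        qed
        have c34: "\<bar>a3^3 + a4^3\<bar> \<le> (12 * C0^2 + 6 * C0) * V"
        proof -
          have "a3^3 + a4^3 = (a3 + a4) * (a3^2 - a3 * a4 + a4^2)" by (simp add: power2_eq_square power3_eq_cube algebra_simps)
          then have "\<bar>a3^3 + a4^3\<bar> = \<bar>a3 + a4\<bar> * \<bar>a3^2 - a3 * a4 + a4^2\<bar>" by (simp add: abs_mult)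
          also have "\<dots> \<le> ((4 * C0 + 2) * \<bar>a5\<bar>) * (3 * (C0 * \<bar>a3\<bar> * \<bar>a4\<bar>))" using s34b q by (intro mult_mono) auto
          also have "\<dots> = (12 * C0^2 + 6 * C0) * V" unfolding V_def by (simp add: power2_eq_square algebra_simps)
          finally show ?thesis .
        qed
        have "\<bar>S\<bar> \<le> (12 * C0^2 + 6 * C0) * V + 2 * V" unfolding S_def using c34 c56
          by (metis abs_sum2 add.assoc)
        also have "\<dots> \<le> W * V"
        proof -
          have "12 * C0^2 + 6 * C0 + 2 \<le> W" unfolding W_def using C0 by simp
          then have "(12 * C0^2 + 6 * C0 + 2) * V \<le> W * V" using V0 by (intro mult_right_mono) auto
          then show ?thesis by (simp add: algebra_simps)
        qed
        finally show ?thesis .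
      qed
    qed
    have P: "\<bar>g a1 + g a2\<bar> \<le> 18 * K1 * C0 * \<bar>S\<bar>"
    proof -
      have "\<bar>g a1 + g a2\<bar> \<le> 9 * K1 * (m a1)^2 * a1^2 * \<bar>a1 + a2\<bar>" using pair[of a1 a1 a2] s12 by simp
      also have "\<dots> \<le> 9 * K1 * 1 * a1^2 * \<bar>a1 + a2\<bar>"
      proof -
        have "(m a1)^2 \<le> 1" using m_le1[of a1] m_pos[of a1] by (simp add: power_le_one)
        then have "(9 * K1) * (m a1)^2 \<le> (9 * K1) * 1" using K1 by (intro mult_left_mono) auto
        then show ?thesis by (intro mult_right_mono) auto
      qed
      also have "\<dots> = 9 * K1 * (a1^2 * \<bar>a1 + a2\<bar>)" by simp
      also have "\<dots> \<le> 9 * K1 * (2 * \<bar>a1^3 + a2^3\<bar>)" using sum_cubes_pair[OF s12] K1 by (intro mult_left_mono) auto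
      also have "\<dots> \<le> 9 * K1 * (2 * (C0 * \<bar>S\<bar>))" using nO2 K1 unfolding S_def by (intro mult_left_mono) auto
      finally show ?thesis by (simp add: algebra_simps)
    qed
    have "\<bar>(g a1 + g a2) + S\<bar> \<le> 18 * K1 * C0 * \<bar>S\<bar> + \<bar>S\<bar>" using P by (intro abs_sum2) auto
    also have "\<dots> = (18 * K1 * C0 + 1) * \<bar>S\<bar>" by (simp add: algebra_simps)
    also have "\<dots> \<le> (18 * K1 * C0 + 1) * (W * V)" using SW K1 C0 by (intro mult_left_mono) auto
    also have "\<dots> \<le> ((18 * K1 * C0 + 1) * W + 2 * (C0 + 1)) * V" using V0 C0 by (simp add: algebra_simps)
    finally show ?thesis unfolding RHS S_def by (simp add: g3 g4 g5 g6 add.assoc)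
  qed
qed

lemma claim3:
  assumes s12: "\<bar>a2\<bar> \<le> \<bar>a1\<bar>" and s23: "\<bar>a3\<bar> \<le> \<bar>a2\<bar>" and s34: "\<bar>a4\<bar> \<le> \<bar>a3\<bar>"
    and s45: "\<bar>a5\<bar> \<le> \<bar>a4\<bar>" and s56: "\<bar>a6\<bar> \<le> \<bar>a5\<bar>" and sum0: "a1 + a2 + a3 + a4 + a5 + a6 = 0"
    and C0: "1 \<le> C0" and h45: "C0 * \<bar>a5\<bar> \<le> \<bar>a4\<bar>"
    and nO4: "\<bar>a4\<bar> < C0 * \<bar>a5\<bar> \<or> \<bar>a1 + a2\<bar> * \<bar>a1 + a3\<bar> * \<bar>a1 + a4\<bar> < C0 * (\<bar>a5\<bar> * \<bar>a1\<bar>^2) \<or>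
              \<bar>g a1 + g a2 + g a3 + g a4\<bar> < C0 * \<bar>g a5 + g a6\<bar>"
  shows "\<bar>g a1 + g a2 + g a3 + g a4 + g a5 + g a6\<bar> \<le>
           ((72 + 72 * K2 + 9 * K1) * (C0 + 2) + 18 * (C0 + 1) + 18) * (m a1)^2 * \<bar>a1\<bar>^2 * \<bar>a5\<bar>"
proof -
  define K3 where "K3 = 72 + 72 * K2 + 9 * K1"
  define c where "c = (m a1)^2"
  define Z where "Z = c * a1^2 * \<bar>a5\<bar>"
  have K30: "0 \<le> K3" unfolding K3_def using K1 K2 by simp
  have c0: "0 \<le> c" and Z0: "0 \<le> Z" unfolding c_def Z_def by auto
  have RHS: "((72 + 72 * K2 + 9 * K1) * (C0 + 2) + 18 * (C0 + 1) + 18) * (m a1)^2 * \<bar>a1\<bar>^2 * \<bar>a5\<bar>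
     = (K3 * (C0 + 2) + 18 * (C0 + 1) + 18) * Z" unfolding K3_def Z_def c_def by (simp add: mult.assoc)
  have l2: "\<bar>a2\<bar> \<le> \<bar>a1\<bar>" and l3: "\<bar>a3\<bar> \<le> \<bar>a1\<bar>" and l4: "\<bar>a4\<bar> \<le> \<bar>a1\<bar>" and l5: "\<bar>a5\<bar> \<le> \<bar>a1\<bar>" and l6: "\<bar>a6\<bar> \<le> \<bar>a1\<bar>"
    using s12 s23 s34 s45 s56 by linarith+
  have g5: "\<bar>g a5\<bar> \<le> 9 * Z" using gb2[OF l5] unfolding Z_def c_def by (simp add: algebra_simps)
  have g6: "\<bar>g a6\<bar> \<le> 9 * Z"
  proof -
    have "\<bar>g a6\<bar> \<le> 9 * c * a1^2 * \<bar>a6\<bar>" using gb2[OF l6] unfolding c_def .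
    also have "\<dots> \<le> 9 * c * a1^2 * \<bar>a5\<bar>" using s56 c0 by (intro mult_left_mono) auto
    finally show ?thesis unfolding Z_def by (simp add: algebra_simps)
  qed
  have g56: "\<bar>g a5 + g a6\<bar> \<le> 18 * Z" using abs_sum2[OF g5 g6] by simp
  show ?thesis
  proof (cases "\<bar>g a1 + g a2 + g a3 + g a4\<bar> < C0 * \<bar>g a5 + g a6\<bar>")
    case True
    have "\<bar>(g a1 + g a2 + g a3 + g a4) + (g a5 + g a6)\<bar> \<le> C0 * \<bar>g a5 + g a6\<bar> + \<bar>g a5 + g a6\<bar>"
      using True by (intro abs_sum2) auto
    also have "\<dots> = (C0 + 1) * \<bar>g a5 + g a6\<bar>" by (simp add: algebra_simps)
    also have "\<dots> \<le> (C0 + 1) * (18 * Z)" using g56 C0 by (intro mult_left_mono) auto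
    also have "\<dots> \<le> (K3 * (C0 + 2) + 18 * (C0 + 1) + 18) * Z"
    proof -
      have "0 \<le> K3 * (C0 + 2) + 18" using K30 C0 by simp
      then have "0 \<le> (K3 * (C0 + 2) + 18) * Z" using Z0 by simp
      then show ?thesis by (simp add: algebra_simps)
    qed
    finally show ?thesis unfolding RHS by (simp add: add.assoc)
  next
    case False
    then have Pr: "\<bar>a1 + a2\<bar> * \<bar>a1 + a3\<bar> * \<bar>a1 + a4\<bar> < C0 * (\<bar>a5\<bar> * \<bar>a1\<bar>^2)" using nO4 h45 by linarith
    have Q: "\<bar>g a1 + g a2 + g a3 + g a4\<bar> \<le> K3 * c *
           (\<bar>(a1 + a2) * (a1 + a3) * (a1 + a4)\<bar> + a1^2 * \<bar>a1 + a2 + a3 + a4\<bar>)"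
      using quad[OF l2 l3 l4] unfolding K3_def c_def .
    have sg: "\<bar>a1 + a2 + a3 + a4\<bar> \<le> 2 * \<bar>a5\<bar>"
    proof -
      have "a1 + a2 + a3 + a4 = - a5 - a6" using sum0 by linarith
      then show ?thesis using s56 by simp
    qed
    have "\<bar>(a1 + a2) * (a1 + a3) * (a1 + a4)\<bar> + a1^2 * \<bar>a1 + a2 + a3 + a4\<bar> \<le> C0 * (\<bar>a5\<bar> * a1^2) + a1^2 * (2 * \<bar>a5\<bar>)"
      using Pr sg by (intro add_mono mult_left_mono) (auto simp: abs_mult)
    also have "\<dots> = (C0 + 2) * (a1^2 * \<bar>a5\<bar>)" by (simp add: algebra_simps)
    finally have "K3 * c * (\<bar>(a1 + a2) * (a1 + a3) * (a1 + a4)\<bar> + a1^2 * \<bar>a1 + a2 + a3 + a4\<bar>) \<le> K3 * c * ((C0 + 2) * (a1^2 * \<bar>a5\<bar>))"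
      using K30 c0 by (intro mult_left_mono) auto
    also have "\<dots> = K3 * (C0 + 2) * Z" unfolding Z_def by (simp add: algebra_simps)
    finally have G4: "\<bar>g a1 + g a2 + g a3 + g a4\<bar> \<le> K3 * (C0 + 2) * Z" using Q by linarith
    have "\<bar>(g a1 + g a2 + g a3 + g a4) + g a5 + g a6\<bar> \<le> K3 * (C0 + 2) * Z + 9 * Z + 9 * Z"
      by (intro abs_sum2 G4 g5 g6)
    also have "\<dots> \<le> (K3 * (C0 + 2) + 18 * (C0 + 1) + 18) * Z"
    proof -
      have "0 \<le> 18 * C0 * Z + 18 * Z" using Z0 C0 by simp
      then show ?thesis by (simp add: algebra_simps)
    qed
    finally show ?thesis unfolding RHS by (simp add: add.assoc)
  qed
qed

end

definition G1 :: "(real \<Rightarrow> real) \<Rightarrow> real \<Rightarrow> real \<Rightarrow> real" where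
  "G1 mu N x = 2 * mu (x / N) * (deriv mu (x / N) / N) * x^3 + 3 * (mu (x / N))^2 * x^2"

definition G2 :: "(real \<Rightarrow> real) \<Rightarrow> real \<Rightarrow> real \<Rightarrow> real" where
  "G2 mu N x = 2 * (deriv mu (x / N) / N)^2 * x^3 + 2 * mu (x / N) * (deriv (deriv mu) (x / N) / N^2) * x^3
     + 12 * mu (x / N) * (deriv mu (x / N) / N) * x^2 + 6 * (mu (x / N))^2 * x"

context
  fixes s :: real and mu :: "real \<Rightarrow> real"
  assumes s1: "1/2 \<le> s" and s2: "s < 1" and prof: "profile s mu"
begin

lemma inst:
  assumes N: "1 \<le> N" and K0: "0 < K"
    and Kb: "\<forall>x. \<bar>deriv mu x\<bar> * \<bar>x\<bar> \<le> K * mu x \<and> \<bar>deriv (deriv mu) x\<bar> * x^2 \<le> K * mu x"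
  shows "gsetup (mult mu N) (\<lambda>x. (mult mu N x)^2 * x^3) (G1 mu N) (G2 mu N) (2 * K + 3) (2 * K^2 + 14 * K + 6) N"
proof -
  have Np: "0 < N" using N by simp
  have dm: "((\<lambda>x. mu (x / N)) has_real_derivative deriv mu (x / N) * (1 / N)) (at x)" for x
    by (rule DERIV_chain2[OF dmu0[OF s1 s2 prof]]) (use Np in \<open>auto intro!: derivative_eq_intros\<close>)
  have dm1: "((\<lambda>x. deriv mu (x / N)) has_real_derivative deriv (deriv mu) (x / N) * (1 / N)) (at x)" for x
    by (rule DERIV_chain2[OF dmu1[OF s1 s2 prof]]) (use Np in \<open>auto intro!: derivative_eq_intros\<close>)
  note mpos = mu_pos[OF s1 s2 prof] and mle = mu_le1[OF s1 s2 prof]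
  show ?thesis
  proof (unfold_locales)
    fix x show "(mult mu N x)^2 * x^3 = (mult mu N x)^2 * x^3" by simp
  next
    fix x show "0 < mult mu N x" unfolding mult_def using mpos by simp
  next
    fix x show "mult mu N x \<le> 1" unfolding mult_def using mle by simp
  next
    fix x y :: real assume h: "\<bar>y\<bar> \<le> \<bar>x\<bar>"
    have "\<bar>y / N\<bar> \<le> \<bar>x / N\<bar>" using h Np by (simp add: divide_right_mono)
    then have "(mu (y / N))^2 * \<bar>y / N\<bar> \<le> 9 * (mu (x / N))^2 * \<bar>x / N\<bar>" by (rule F1u[OF s1 s2 prof])
    then show "(mult mu N y)^2 * \<bar>y\<bar> \<le> 9 * (mult mu N x)^2 * \<bar>x\<bar>" unfolding mult_def using Np by (simp add: divide_le_cancel)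
  next
    fix x y :: real assume h: "\<bar>y\<bar> \<le> \<bar>x\<bar>"
    have "\<bar>y / N\<bar> \<le> \<bar>x / N\<bar>" using h Np by (simp add: divide_right_mono)
    then have "mu (y / N) * \<bar>y / N\<bar> \<le> 3 * mu (x / N) * \<bar>x / N\<bar>" by (rule F2u[OF s1 s2 prof])
    then show "mult mu N y * \<bar>y\<bar> \<le> 3 * mult mu N x * \<bar>x\<bar>" unfolding mult_def using Np by (simp add: divide_le_cancel)
  next
    fix x show "mult mu N (-x) = mult mu N x" unfolding mult_def using mu_even[OF s1 s2 prof, of "x / N"] by simp
  next
    fix x :: real assume "\<bar>x\<bar> \<le> N"
    then have "\<bar>x / N\<bar> \<le> 1" using Np by simp
    then show "mult mu N x = 1" unfolding mult_def by (rule mu_one[OF s1 s2 prof])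
  next
    fix x
    show "((\<lambda>x. (mult mu N x)^2 * x^3) has_real_derivative G1 mu N x) (at x)"
      unfolding mult_def G1_def
      by (auto intro!: derivative_eq_intros dm simp: power2_eq_square power3_eq_cube algebra_simps)
  next
    fix x
    show "(G1 mu N has_real_derivative G2 mu N x) (at x)"
      unfolding G1_def G2_def[abs_def] using Np
      by (auto intro!: derivative_eq_intros dm dm1 simp: power2_eq_square power3_eq_cube field_simps)
  next
    fix x
    define u where "u = mu (x / N)"
    define p where "p = deriv mu (x / N) * (x / N)"
    have u0: "0 < u" unfolding u_def using mpos by simp
    have P: "\<bar>p\<bar> \<le> K * u" unfolding p_def u_def using Kb[rule_format, of "x / N"] by (simp add: abs_mult)
    have e: "G1 mu N x = 2 * u * p * x^2 + 3 * u^2 * x^2" unfolding G1_def u_def p_def using Np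
      by (simp add: field_simps power2_eq_square power3_eq_cube)
    have "\<bar>G1 mu N x\<bar> \<le> 2 * u * \<bar>p\<bar> * x^2 + 3 * u^2 * x^2" unfolding e
      using u0 by (intro abs_sum2) (simp_all add: abs_mult)
    also have "2 * u * \<bar>p\<bar> * x^2 \<le> 2 * u * (K * u) * x^2" using P u0 by (intro mult_right_mono mult_left_mono) auto
    finally show "\<bar>G1 mu N x\<bar> \<le> (2 * K + 3) * (mult mu N x)^2 * x^2" unfolding mult_def u_def[symmetric]
      by (simp add: power2_eq_square algebra_simps)
  next
    fix x
    define u where "u = mu (x / N)"
    define p where "p = deriv mu (x / N) * (x / N)"
    define r where "r = deriv (deriv mu) (x / N) * (x / N)^2"
    have u0: "0 < u" unfolding u_def using mpos by simp
    have P: "\<bar>p\<bar> \<le> K * u" unfolding p_def u_def using Kb[rule_format, of "x / N"] by (simp add: abs_mult)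
    have R: "\<bar>r\<bar> \<le> K * u" unfolding r_def u_def using Kb[rule_format, of "x / N"] by (simp add: abs_mult)
    have e: "G2 mu N x = 2 * p^2 * x + 2 * u * r * x + 12 * u * p * x + 6 * u^2 * x" unfolding G2_def u_def p_def r_def using Np
      by (simp add: field_simps power2_eq_square power3_eq_cube)
    have "\<bar>G2 mu N x\<bar> \<le> 2 * p^2 * \<bar>x\<bar> + 2 * u * \<bar>r\<bar> * \<bar>x\<bar> + 12 * u * \<bar>p\<bar> * \<bar>x\<bar> + 6 * u^2 * \<bar>x\<bar>" unfolding e
      using u0 by (intro abs_sum2) (simp_all add: abs_mult)
    also have "2 * p^2 * \<bar>x\<bar> \<le> 2 * (K * u)^2 * \<bar>x\<bar>"
    proof -
      have "\<bar>p\<bar> * \<bar>p\<bar> \<le> (K * u) * (K * u)" using P by (intro mult_mono) auto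
      then have "p^2 \<le> (K * u)^2" by (simp add: power2_eq_square)
      then show ?thesis by (intro mult_right_mono mult_left_mono) auto
    qed
    also have "2 * u * \<bar>r\<bar> * \<bar>x\<bar> \<le> 2 * u * (K * u) * \<bar>x\<bar>" using R u0 by (intro mult_right_mono mult_left_mono) auto
    also have "12 * u * \<bar>p\<bar> * \<bar>x\<bar> \<le> 12 * u * (K * u) * \<bar>x\<bar>" using P u0 by (intro mult_right_mono mult_left_mono) auto
    finally show "\<bar>G2 mu N x\<bar> \<le> (2 * K^2 + 14 * K + 6) * (mult mu N x)^2 * \<bar>x\<bar>" unfolding mult_def u_def[symmetric]
      by (simp add: power2_eq_square algebra_simps)
  qed (use K0 in auto)
qed

end

lemma star_sum:
  fixes f :: "real \<Rightarrow> real"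
  assumes n: "n = 5 \<or> n = 6" and S: "sorts n xi \<sigma>" and f0: "f 0 = 0"
  shows "(\<Sum>j=1..n. f (xi j)) = f (star n xi \<sigma> 1) + f (star n xi \<sigma> 2) + f (star n xi \<sigma> 3)
           + f (star n xi \<sigma> 4) + f (star n xi \<sigma> 5) + f (star n xi \<sigma> 6)"
proof -
  have bij: "bij_betw \<sigma> {1..n} {1..n}" using S unfolding sorts_def by blast
  have "(\<Sum>j=1..n. f (xi j)) = (\<Sum>i=1..n. f (xi (\<sigma> i)))"
    using sum.reindex_bij_betw[OF bij, of "\<lambda>j. f (xi j)"] by simp
  also have "\<dots> = (\<Sum>i=1..n. f (star n xi \<sigma> i))" by (rule sum.cong) (auto simp: star_def)
  also have "\<dots> = (\<Sum>i=1..(6::nat). f (star n xi \<sigma> i))"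
    using n
  proof
    assume n5: "n = 5"
    have "(\<Sum>i=1..(6::nat). f (star n xi \<sigma> i)) = (\<Sum>i=1..(5::nat). f (star n xi \<sigma> i)) + f (star n xi \<sigma> 6)"
      by (simp add: numeral_eq_Suc)
    also have "f (star n xi \<sigma> 6) = 0" using n5 f0 by (simp add: star_def)
    finally show ?thesis using n5 by simp
  qed simp
  also have "\<dots> = f (star n xi \<sigma> 1) + f (star n xi \<sigma> 2) + f (star n xi \<sigma> 3)
           + f (star n xi \<sigma> 4) + f (star n xi \<sigma> 5) + f (star n xi \<sigma> 6)" by (simp add: numeral_eq_Suc)
  finally show ?thesis .
qed

lemma star_sum3:
  fixes f :: "real \<Rightarrow> real"
  assumes n: "n = 5 \<or> n = 6" and f0: "f 0 = 0"
  shows "(\<Sum>j=3..n. f (star n xi \<sigma> j)) = f (star n xi \<sigma> 3) + f (star n xi \<sigma> 4) + f (star n xi \<sigma> 5) + f (star n xi \<sigma> 6)"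
  using n
proof
  assume n5: "n = 5"
  have "f (star n xi \<sigma> 6) = 0" using n5 f0 by (simp add: star_def)
  then show ?thesis using n5 by (simp add: numeral_eq_Suc)
qed (simp add: numeral_eq_Suc)

lemma star_sorted:
  assumes n: "n = 5 \<or> n = 6" and S: "sorts n xi \<sigma>" and i: "1 \<le> i" "i \<le> 5"
  shows "\<bar>star n xi \<sigma> (Suc i)\<bar> \<le> \<bar>star n xi \<sigma> i\<bar>"
proof (cases "Suc i \<le> n")
  case True
  then show ?thesis using S i unfolding sorts_def star_def by auto
next
  case False
  then show ?thesis unfolding star_def by auto
qed

lemma mono4: fixes A c1 c x y z :: real
  assumes "A \<le> c1 * x * y * z" "c1 \<le> c" "0 \<le> x" "0 \<le> y" "0 \<le> z"
  shows "A \<le> c * x * y * z"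
proof -
  have "c1 * x \<le> c * x" using assms by (intro mult_right_mono) auto
  then have "c1 * x * y \<le> c * x * y" using assms by (intro mult_right_mono) auto
  then have "c1 * x * y * z \<le> c * x * y * z" using assms by (intro mult_right_mono) auto
  then show ?thesis using assms(1) by linarith
qed

theorem mainTheorem3:
  fixes k :: nat and s :: real and mu :: "real \<Rightarrow> real"
  assumes "k \<in> {3, 4}" and "1/2 \<le> s" and "s < 1" and "profile s mu"
  shows "\<forall>D\<ge>1. \<exists>C0min. \<forall>C0\<ge>C0min. \<exists>C>0.
    \<forall>N lam xi \<sigma>. N \<ge> 1 \<longrightarrow> lam \<ge> 1 \<longrightarrow> in_Gamma (k+2) lam xi \<longrightarrow> sorts (k+2) xi \<sigma> \<longrightarrow>
      (let m = mult mu N; xs = star (k+2) xi \<sigma>; M = cmod (Mk (k+2) m xi) in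
       \<not> in_Omega (k+2) C0 D N m xs \<longrightarrow>
         M \<le> C * (m (xs 1))\<^sup>2 * \<bar>xs 1\<bar> * \<bar>xs 3\<bar>\<^sup>2 \<and>
         (sim D \<bar>xs 1\<bar> \<bar>xs 2\<bar> \<and> gtrsim D \<bar>xs 2\<bar> N \<and> ll C0 \<bar>xs 3\<bar> N \<and> sim D \<bar>xs 3\<bar> \<bar>xs 4\<bar>
            \<longrightarrow> M \<le> C * \<bar>xs 3\<bar> * \<bar>xs 4\<bar> * \<bar>xs 5\<bar>) \<and>
         (ll C0 \<bar>xs 5\<bar> \<bar>xs 4\<bar> \<longrightarrow> M \<le> C * (m (xs 1))\<^sup>2 * \<bar>xs 1\<bar>\<^sup>2 * \<bar>xs 5\<bar>))"
proof -
  have n: "k + 2 = 5 \<or> k + 2 = 6" using assms(1) by auto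
  obtain K where K0: "0 < K" and Kb: "\<forall>x. \<bar>deriv mu x\<bar> * \<bar>x\<bar> \<le> K * mu x \<and> \<bar>deriv (deriv mu) x\<bar> * x^2 \<le> K * mu x"
    using K_exists[OF assms(2,3,4)] by blast
  show ?thesis
  proof (intro allI impI)
    fix D :: real assume D: "1 \<le> D"
    show "\<exists>C0min. \<forall>C0\<ge>C0min. \<exists>C>0.
    \<forall>N lam xi \<sigma>. N \<ge> 1 \<longrightarrow> lam \<ge> 1 \<longrightarrow> in_Gamma (k+2) lam xi \<longrightarrow> sorts (k+2) xi \<sigma> \<longrightarrow>
      (let m = mult mu N; xs = star (k+2) xi \<sigma>; M = cmod (Mk (k+2) m xi) in
       \<not> in_Omega (k+2) C0 D N m xs \<longrightarrow>
         M \<le> C * (m (xs 1))\<^sup>2 * \<bar>xs 1\<bar> * \<bar>xs 3\<bar>\<^sup>2 \<and>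
         (sim D \<bar>xs 1\<bar> \<bar>xs 2\<bar> \<and> gtrsim D \<bar>xs 2\<bar> N \<and> ll C0 \<bar>xs 3\<bar> N \<and> sim D \<bar>xs 3\<bar> \<bar>xs 4\<bar>
            \<longrightarrow> M \<le> C * \<bar>xs 3\<bar> * \<bar>xs 4\<bar> * \<bar>xs 5\<bar>) \<and>
         (ll C0 \<bar>xs 5\<bar> \<bar>xs 4\<bar> \<longrightarrow> M \<le> C * (m (xs 1))\<^sup>2 * \<bar>xs 1\<bar>\<^sup>2 * \<bar>xs 5\<bar>))"
    proof (rule exI[of _ "2 * D + 1"], intro allI impI)
      fix C0 :: real assume C0: "2 * D + 1 \<le> C0"
      have C01: "1 \<le> C0" and CD: "2 * D \<le> C0" using C0 D by auto
      define C1 where "C1 = 54 * C0^2 + 9 * (2 * K + 3) * C0 + 36"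
      define C2 where "C2 = (18 * (2 * K + 3) * C0 + 1) * (4 * C0^3 + 12 * C0^2 + 6 * C0 + 2) + 2 * (C0 + 1)"
      define C3 where "C3 = (72 + 72 * (2 * K^2 + 14 * K + 6) + 9 * (2 * K + 3)) * (C0 + 2) + 18 * (C0 + 1) + 18"
      have C1p: "36 \<le> C1" unfolding C1_def using K0 C01 by simp
      have C2p: "0 \<le> C2" unfolding C2_def using K0 C01 by simp
      have C3p: "0 \<le> C3" unfolding C3_def using K0 C01 by simp
      define C where "C = C1 + C2 + C3"
      have CC: "C1 \<le> C" "C2 \<le> C" "C3 \<le> C" unfolding C_def using C1p C2p C3p by auto
      show "\<exists>C>0. \<forall>N lam xi \<sigma>. N \<ge> 1 \<longrightarrow> lam \<ge> 1 \<longrightarrow> in_Gamma (k+2) lam xi \<longrightarrow> sorts (k+2) xi \<sigma> \<longrightarrow>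
      (let m = mult mu N; xs = star (k+2) xi \<sigma>; M = cmod (Mk (k+2) m xi) in
       \<not> in_Omega (k+2) C0 D N m xs \<longrightarrow>
         M \<le> C * (m (xs 1))\<^sup>2 * \<bar>xs 1\<bar> * \<bar>xs 3\<bar>\<^sup>2 \<and>
         (sim D \<bar>xs 1\<bar> \<bar>xs 2\<bar> \<and> gtrsim D \<bar>xs 2\<bar> N \<and> ll C0 \<bar>xs 3\<bar> N \<and> sim D \<bar>xs 3\<bar> \<bar>xs 4\<bar>
            \<longrightarrow> M \<le> C * \<bar>xs 3\<bar> * \<bar>xs 4\<bar> * \<bar>xs 5\<bar>) \<and>
         (ll C0 \<bar>xs 5\<bar> \<bar>xs 4\<bar> \<longrightarrow> M \<le> C * (m (xs 1))\<^sup>2 * \<bar>xs 1\<bar>\<^sup>2 * \<bar>xs 5\<bar>))"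
      proof (rule exI[of _ C], intro conjI allI impI)
        show "0 < C" using CC C1p by linarith
        fix N lam :: real and xi :: "nat \<Rightarrow> real" and \<sigma> :: "nat \<Rightarrow> nat"
        assume N: "1 \<le> N" and lam: "1 \<le> lam" and G: "in_Gamma (k+2) lam xi" and S: "sorts (k+2) xi \<sigma>"
        interpret gs: gsetup "mult mu N" "\<lambda>x. (mult mu N x)^2 * x^3" "G1 mu N" "G2 mu N" "2 * K + 3" "2 * K^2 + 14 * K + 6" N
          by (rule inst[OF assms(2,3,4) N K0 Kb])
        define xs where "xs = star (k+2) xi \<sigma>"
        define M where "M = cmod (Mk (k+2) (mult mu N) xi)"
        have s12: "\<bar>xs 2\<bar> \<le> \<bar>xs 1\<bar>" and s23: "\<bar>xs 3\<bar> \<le> \<bar>xs 2\<bar>" and s34: "\<bar>xs 4\<bar> \<le> \<bar>xs 3\<bar>"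
          and s45: "\<bar>xs 5\<bar> \<le> \<bar>xs 4\<bar>" and s56: "\<bar>xs 6\<bar> \<le> \<bar>xs 5\<bar>"
          unfolding xs_def using star_sorted[OF n S, of 1] star_sorted[OF n S, of 2] star_sorted[OF n S, of 3]
            star_sorted[OF n S, of 4] star_sorted[OF n S, of 5] by (simp_all add: numeral_eq_Suc)
        have sum0: "xs 1 + xs 2 + xs 3 + xs 4 + xs 5 + xs 6 = 0"
        proof -
          have "(\<Sum>j=1..k+2. xi j) = 0" using G unfolding in_Gamma_def by blast
          then show ?thesis using star_sum[OF n S, of "\<lambda>x. x"] unfolding xs_def by simp
        qed
        have Meq: "M = \<bar>(mult mu N (xs 1))^2 * (xs 1)^3 + (mult mu N (xs 2))^2 * (xs 2)^3 + (mult mu N (xs 3))^2 * (xs 3)^3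
            + (mult mu N (xs 4))^2 * (xs 4)^3 + (mult mu N (xs 5))^2 * (xs 5)^3 + (mult mu N (xs 6))^2 * (xs 6)^3\<bar>"
        proof -
          have "M = \<bar>\<Sum>j=1..k+2. (mult mu N (xi j))^2 * (xi j)^3\<bar>" unfolding M_def Mk_def norm_mult norm_ii norm_of_real by simp
          then show ?thesis using star_sum[OF n S, of "\<lambda>x. (mult mu N x)^2 * x^3"] unfolding xs_def by simp
        qed
        show "let m = mult mu N; xs = star (k+2) xi \<sigma>; M = cmod (Mk (k+2) m xi) in
       \<not> in_Omega (k+2) C0 D N m xs \<longrightarrow>
         M \<le> C * (m (xs 1))\<^sup>2 * \<bar>xs 1\<bar> * \<bar>xs 3\<bar>\<^sup>2 \<and>
         (sim D \<bar>xs 1\<bar> \<bar>xs 2\<bar> \<and> gtrsim D \<bar>xs 2\<bar> N \<and> ll C0 \<bar>xs 3\<bar> N \<and> sim D \<bar>xs 3\<bar> \<bar>xs 4\<bar>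
            \<longrightarrow> M \<le> C * \<bar>xs 3\<bar> * \<bar>xs 4\<bar> * \<bar>xs 5\<bar>) \<and>
         (ll C0 \<bar>xs 5\<bar> \<bar>xs 4\<bar> \<longrightarrow> M \<le> C * (m (xs 1))\<^sup>2 * \<bar>xs 1\<bar>\<^sup>2 * \<bar>xs 5\<bar>)"
          unfolding Let_def xs_def[symmetric] M_def[symmetric]
        proof (intro impI conjI)
          assume nO: "\<not> in_Omega (k+2) C0 D N (mult mu N) xs"
          have nO1: "\<bar>xs 3\<bar> < C0 * \<bar>xs 4\<bar>" using nO unfolding in_Omega_def Omega1_def ll_def by auto
          have nO3: "\<not> (C0 * \<bar>xs 3\<bar> \<le> \<bar>xs 1\<bar> \<and> C0 * \<bar>xs 3\<bar>^2 \<le> \<bar>xs 1 + xs 2\<bar> * \<bar>xs 1\<bar>)"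
            using nO unfolding in_Omega_def Omega3_def ll_def by auto
          have s4: "(\<Sum>j=1..(4::nat). (mult mu N (xs j))^2 * (xs j)^3) = (mult mu N (xs 1))^2 * (xs 1)^3 + (mult mu N (xs 2))^2 * (xs 2)^3 + (mult mu N (xs 3))^2 * (xs 3)^3
            + (mult mu N (xs 4))^2 * (xs 4)^3" by (simp add: numeral_eq_Suc)
          have nO4: "\<bar>xs 4\<bar> < C0 * \<bar>xs 5\<bar> \<or> \<bar>xs 1 + xs 2\<bar> * \<bar>xs 1 + xs 3\<bar> * \<bar>xs 1 + xs 4\<bar> < C0 * (\<bar>xs 5\<bar> * \<bar>xs 1\<bar>^2) \<or>
              \<bar>(mult mu N (xs 1))^2 * (xs 1)^3 + (mult mu N (xs 2))^2 * (xs 2)^3 + (mult mu N (xs 3))^2 * (xs 3)^3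
            + (mult mu N (xs 4))^2 * (xs 4)^3\<bar> < C0 * \<bar>(mult mu N (xs 5))^2 * (xs 5)^3 + (mult mu N (xs 6))^2 * (xs 6)^3\<bar>"
            using nO unfolding in_Omega_def Omega4_def ll_def s4 by auto
          show "M \<le> C * (mult mu N (xs 1))\<^sup>2 * \<bar>xs 1\<bar> * \<bar>xs 3\<bar>\<^sup>2"
            unfolding Meq by (rule mono4[OF gs.claim1[OF s12 s23 s34 s45 s56 C01 nO3]]) (use CC in \<open>auto simp: C1_def\<close>)
          show "M \<le> C * (mult mu N (xs 1))\<^sup>2 * \<bar>xs 1\<bar>\<^sup>2 * \<bar>xs 5\<bar>" if h: "ll C0 \<bar>xs 5\<bar> \<bar>xs 4\<bar>"
          proof -
            have h45: "C0 * \<bar>xs 5\<bar> \<le> \<bar>xs 4\<bar>" using h unfolding ll_def .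
            show ?thesis
              unfolding Meq by (rule mono4[OF gs.claim3[OF s12 s23 s34 s45 s56 sum0 C01 h45 nO4]]) (use CC in \<open>auto simp: C3_def\<close>)
          qed
          show "M \<le> C * \<bar>xs 3\<bar> * \<bar>xs 4\<bar> * \<bar>xs 5\<bar>"
            if h: "sim D \<bar>xs 1\<bar> \<bar>xs 2\<bar> \<and> gtrsim D \<bar>xs 2\<bar> N \<and> ll C0 \<bar>xs 3\<bar> N \<and> sim D \<bar>xs 3\<bar> \<bar>xs 4\<bar>"
          proof -
            have h3N: "C0 * \<bar>xs 3\<bar> \<le> N" and hN2: "N \<le> D * \<bar>xs 2\<bar>" using h unfolding ll_def gtrsim_def by auto
            have s3: "(\<Sum>j=3..k+2. (xs j)^3) = (xs 3)^3 + (xs 4)^3 + (xs 5)^3 + (xs 6)^3"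
              using star_sum3[OF n, of "\<lambda>x. x^3" xi \<sigma>] unfolding xs_def by simp
            have nO2: "\<bar>(xs 1)^3 + (xs 2)^3\<bar> < C0 * \<bar>(xs 3)^3 + (xs 4)^3 + (xs 5)^3 + (xs 6)^3\<bar>"
              using nO h unfolding in_Omega_def Omega2_def ll_def s3 by auto
            show ?thesis
              unfolding Meq
              by (rule mono4[OF gs.claim2[OF s12 s23 s34 s45 s56 sum0 C01 D CD h3N hN2 nO1 nO2 nO4]])
                (use CC in \<open>auto simp: C2_def\<close>)
          qed
        qed
      qed
    qed
  qed
qed

end
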